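(* Let $\lambda_1>0$ and let $\chi:[0,\infty)\to[0,\infty)$ be smooth with $\chi(s)=1$ for $s\in[0,\lambda_1/2)$ and $\chi(s)=0$ for $s>\lambda_1$. For $m\ge2$ and $\lambda\ge0$ set $P_m(\lambda)=2m(\sqrt{\lambda+m^2}-m)+\chi(\lambda)$ and $P_\infty(\lambda)=\lambda+\chi(\lambda)$. Then for every positive integer $k$ there is $C_k>0$ such that for all $m\ge2$ and $\lambda>0$: (1) $\Big|\big(\tfrac{d}{d\lambda}\big)^k\big(\tfrac{P_m(\lambda)}{P_\infty(\lambda)}\big)\Big|\le\dfrac{C_k}{\lambda^k}$; (2) $\Big|\big(\tfrac{d}{d\lambda}\big)^k\big(\tfrac1{P_\infty(\lambda)}-\tfrac1{P_m(\lambda)}\big)\Big|\le\dfrac{C_k}{\lambda^k}\min\Big\{\dfrac1{m^2},\dfrac1{m(\lambda+1)^{1/2}}\Big\}$.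
   Context: In the paper $\lambda_1$ is the smallest Dirichlet eigenvalue of $-\Delta$ on a smooth bounded domain $\Omega\subset\mathbb{R}^n$, $n\ge3$. *)

theory Defs
  imports "HOL-Analysis.Analysis"
begin

text \<open>C-infinity on a set S: all iterated derivatives exist at every point of S
  (meaningful for open S).\<close>
definition smooth_on :: "real set \<Rightarrow> (real \<Rightarrow> real) \<Rightarrow> bool" where
  "smooth_on S f \<longleftrightarrow> (\<forall>k. \<forall>x\<in>S. ((deriv ^^ k) f) differentiable (at x))"

definition Pm :: "(real \<Rightarrow> real) \<Rightarrow> real \<Rightarrow> real \<Rightarrow> real" where
  "Pm chi m l = 2 * m * (sqrt (l + m\<^sup>2) - m) + chi l"

definition Pinf :: "(real \<Rightarrow> real) \<Rightarrow> real \<Rightarrow> real" where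
  "Pinf chi l = l + chi l"

end

theory Submission imports Defs "HOL-Complex_Analysis.Complex_Analysis" begin

definition sm :: "nat \<Rightarrow> real set \<Rightarrow> (real \<Rightarrow> real) \<Rightarrow> bool" where
  "sm n S f \<longleftrightarrow> (\<forall>k<n. \<forall>x\<in>S. ((deriv ^^ k) f) differentiable (at x))"

lemma funpow_deriv_Suc: "(deriv ^^ Suc k) f = (deriv ^^ k) (deriv f)"
  by (simp add: funpow_Suc_right del: funpow.simps)

lemma sm_Suc: "sm (Suc n) S f \<longleftrightarrow> (\<forall>x\<in>S. f differentiable (at x)) \<and> sm n S (deriv f)"
proof
  assume a: "sm (Suc n) S f"
  have "\<forall>x\<in>S. (deriv ^^ 0) f differentiable (at x)" using a unfolding sm_def by blast
  moreover have "sm n S (deriv f)" unfolding sm_def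
  proof (intro allI impI ballI)
    fix k x assume "k < n" "x \<in> S"
    then have "Suc k < Suc n" by simp
    then have "(deriv ^^ Suc k) f differentiable (at x)" using a \<open>x \<in> S\<close> unfolding sm_def by blast
    then show "(deriv ^^ k) (deriv f) differentiable (at x)" by (simp only: funpow_deriv_Suc)
  qed
  ultimately show "(\<forall>x\<in>S. f differentiable (at x)) \<and> sm n S (deriv f)" by simp
next
  assume a: "(\<forall>x\<in>S. f differentiable (at x)) \<and> sm n S (deriv f)"
  show "sm (Suc n) S f" unfolding sm_def
  proof (intro allI impI ballI)
    fix k x assume "k < Suc n" "x \<in> S"
    show "(deriv ^^ k) f differentiable (at x)"
    proof (cases k)
      case 0 then show ?thesis using a \<open>x \<in> S\<close> by (simp only: funpow_0)
    next
      case (Suc j)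
      then have "j < n" using \<open>k < Suc n\<close> by simp
      then have "(deriv ^^ j) (deriv f) differentiable (at x)"
        using a \<open>x \<in> S\<close> unfolding sm_def by blast
      then show ?thesis using Suc by (simp only: funpow_deriv_Suc)
    qed
  qed
qed

lemma smooth_on_sm: "smooth_on S f \<longleftrightarrow> (\<forall>n. sm n S f)"
  unfolding smooth_on_def sm_def
proof safe
  fix n k x assume "\<forall>k. \<forall>x\<in>S. (deriv ^^ k) f differentiable at x" "x \<in> S"
  then show "(deriv ^^ k) f differentiable at x" by blast
next
  fix k x assume a: "\<forall>n k. k < n \<longrightarrow> (\<forall>x\<in>S. (deriv ^^ k) f differentiable at x)" "x \<in> S"
  have "k < Suc k" by simp
  then show "(deriv ^^ k) f differentiable at x" using a by blast
qed

lemma sm_mono: "sm n S f \<Longrightarrow> m \<le> n \<Longrightarrow> sm m S f"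
  unfolding sm_def by auto

lemma higher_deriv_eq_open:
  assumes "open S" "\<forall>y\<in>S. f y = g y" "x \<in> S"
  shows "(deriv ^^ k) f x = (deriv ^^ k) g x"
proof (rule higher_deriv_cong_ev)
  show "\<forall>\<^sub>F y in nhds x. f y = g y"
    by (rule eventually_mono[OF eventually_nhds_in_open[OF assms(1,3)]]) (use assms(2) in blast)
qed simp

lemma differentiable_eq_open:
  fixes f g :: "real \<Rightarrow> real"
  assumes "open S" "\<forall>y\<in>S. f y = g y" "x \<in> S" "f differentiable (at x)"
  shows "g differentiable (at x)"
proof -
  obtain D where "(f has_derivative D) (at x)" using assms(4) unfolding differentiable_def by blast
  then have "(g has_derivative D) (at x)"
    by (rule has_derivative_transform_within_open[OF _ assms(1,3)]) (use assms(2) in auto)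
  then show ?thesis unfolding differentiable_def by blast
qed

lemma sm_cong:
  assumes "open S" "\<forall>y\<in>S. f y = g y" "sm n S f"
  shows "sm n S g"
  unfolding sm_def
proof (intro allI impI ballI)
  fix k x assume "k < n" "x \<in> S"
  have "\<forall>y\<in>S. (deriv ^^ k) f y = (deriv ^^ k) g y"
    using higher_deriv_eq_open[OF assms(1,2)] by blast
  moreover have "(deriv ^^ k) f differentiable (at x)" using assms(3) \<open>k<n\<close> \<open>x\<in>S\<close> unfolding sm_def by blast
  ultimately show "(deriv ^^ k) g differentiable (at x)"
    using differentiable_eq_open[OF assms(1) _ \<open>x\<in>S\<close>] by blast
qed

lemma smooth_on_cong:
  assumes "open S" "\<forall>y\<in>S. f y = g y" "smooth_on S f"
  shows "smooth_on S g"
proof -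
  have "\<forall>n. sm n S f" using assms(3) unfolding smooth_on_sm .
  then have "\<forall>n. sm n S g" using sm_cong[OF assms(1,2)] by blast
  then show ?thesis unfolding smooth_on_sm .
qed


lemma deriv_real: "f differentiable (at x) \<Longrightarrow> (f has_real_derivative deriv f x) (at x)"
  by (simp add: DERIV_deriv_iff_real_differentiable)

lemma real_diff_of_deriv: "(f has_real_derivative D) (at x) \<Longrightarrow> f differentiable (at x)"
  using real_differentiable_def differentiable_def
  by (metis DERIV_deriv_iff_real_differentiable DERIV_imp_deriv)

lemma sm_const: "sm n S (\<lambda>_. c)"
proof (induction n arbitrary: c)
  case 0 then show ?case by (simp add: sm_def)
next
  case (Suc n)
  have "deriv (\<lambda>_. c) = (\<lambda>_. (0::real))" by (rule ext) simp
  then have "sm n S (deriv (\<lambda>_. c))" using Suc.IH[of 0] by simp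
  moreover have "\<forall>x\<in>S. (\<lambda>_. c) differentiable (at x)" by simp
  ultimately show ?case unfolding sm_Suc by blast
qed

lemma sm_add:
  assumes "open S" "sm n S f" "sm n S g"
  shows "sm n S (\<lambda>x. f x + g x)"
  using assms(2,3)
proof (induction n arbitrary: f g)
  case 0 then show ?case by (simp add: sm_def)
next
  case (Suc n)
  have df: "\<forall>x\<in>S. f differentiable (at x)" and dg: "\<forall>x\<in>S. g differentiable (at x)"
    using Suc.prems unfolding sm_Suc by blast+
  have a: "sm n S (deriv f)" "sm n S (deriv g)" using Suc.prems unfolding sm_Suc by blast+
  have e: "\<forall>y\<in>S. deriv f y + deriv g y = deriv (\<lambda>x. f x + g x) y"
  proof
    fix y assume "y \<in> S"
    have "((\<lambda>x. f x + g x) has_real_derivative deriv f y + deriv g y) (at y)"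
      using DERIV_add[OF deriv_real deriv_real] df dg \<open>y\<in>S\<close> by blast
    then show "deriv f y + deriv g y = deriv (\<lambda>x. f x + g x) y" by (rule DERIV_imp_deriv[symmetric])
  qed
  have "sm n S (deriv (\<lambda>x. f x + g x))"
    using sm_cong[OF assms(1) e Suc.IH[OF a]] .
  moreover have "\<forall>x\<in>S. (\<lambda>x. f x + g x) differentiable (at x)"
    using df dg differentiable_add by blast
  ultimately show ?case unfolding sm_Suc by blast
qed

lemma sm_mult:
  assumes "open S" "sm n S f" "sm n S g"
  shows "sm n S (\<lambda>x. f x * g x)"
  using assms(2,3)
proof (induction n arbitrary: f g)
  case 0 then show ?case by (simp add: sm_def)
next
  case (Suc n)
  have df: "\<forall>x\<in>S. f differentiable (at x)" and dg: "\<forall>x\<in>S. g differentiable (at x)"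
    using Suc.prems unfolding sm_Suc by blast+
  have a: "sm n S (deriv f)" "sm n S (deriv g)" using Suc.prems unfolding sm_Suc by blast+
  have b: "sm n S f" "sm n S g" using Suc.prems sm_mono le_SucI by blast+
  have e: "\<forall>y\<in>S. deriv f y * g y + f y * deriv g y = deriv (\<lambda>x. f x * g x) y"
  proof
    fix y assume "y \<in> S"
    have "((\<lambda>x. f x * g x) has_real_derivative deriv f y * g y + deriv g y * f y) (at y)"
      using DERIV_mult[OF deriv_real deriv_real] df dg \<open>y\<in>S\<close> by blast
    then show "deriv f y * g y + f y * deriv g y = deriv (\<lambda>x. f x * g x) y"
      by (subst mult.commute[of "f y"]) (rule DERIV_imp_deriv[symmetric])
  qed
  have "sm n S (\<lambda>y. deriv f y * g y + f y * deriv g y)"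
    using sm_add[OF assms(1) Suc.IH[OF a(1) b(2)] Suc.IH[OF b(1) a(2)]] .
  then have "sm n S (deriv (\<lambda>x. f x * g x))"
    using sm_cong[OF assms(1) e] by blast
  moreover have "\<forall>x\<in>S. (\<lambda>x. f x * g x) differentiable (at x)"
    using df dg differentiable_mult by blast
  ultimately show ?case unfolding sm_Suc by blast
qed

lemma deriv_inv_has:
  assumes "v differentiable (at y)" "v y \<noteq> 0"
  shows "((\<lambda>x. 1 / v x) has_real_derivative (- deriv v y) * ((1 / v y) * (1 / v y))) (at y)"
proof -
  have "((\<lambda>x. inverse (v x)) has_real_derivative (- (deriv v y * inverse (v y ^ Suc (Suc 0))))) (at y)"
    by (rule DERIV_inverse_fun[OF deriv_real[OF assms(1)] assms(2)])
  moreover have "- (deriv v y * inverse (v y ^ Suc (Suc 0))) = (- deriv v y) * ((1 / v y) * (1 / v y))"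
    using assms(2) by (simp add: field_simps)
  ultimately show ?thesis by (simp add: inverse_eq_divide)
qed

lemma sm_inverse:
  assumes "open S" "sm n S v" "\<forall>x\<in>S. v x \<noteq> 0"
  shows "sm n S (\<lambda>x. 1 / v x)"
  using assms(2)
proof (induction n)
  case 0 then show ?case by (simp add: sm_def)
next
  case (Suc n)
  have dv: "\<forall>x\<in>S. v differentiable (at x)"
    using Suc.prems unfolding sm_Suc by blast
  have e: "\<forall>y\<in>S. (- deriv v y) * ((1 / v y) * (1 / v y)) = deriv (\<lambda>x. 1 / v x) y"
    using dv assms(3) deriv_inv_has DERIV_imp_deriv by metis
  have a: "sm n S (deriv v)" using Suc.prems unfolding sm_Suc by blast
  have b: "sm n S (\<lambda>y. (-1) * deriv v y)"
    using sm_mult[OF assms(1) sm_const a] .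
  have c: "sm n S (\<lambda>x. 1 / v x)"
    using Suc.IH Suc.prems sm_mono le_SucI by blast
  have "sm n S (\<lambda>y. ((-1) * deriv v y) * ((1 / v y) * (1 / v y)))"
    using sm_mult[OF assms(1) b sm_mult[OF assms(1) c c]] .
  then have "sm n S (deriv (\<lambda>x. 1 / v x))"
    using sm_cong[OF assms(1) e] by simp
  moreover have "\<forall>x\<in>S. (\<lambda>x. 1 / v x) differentiable (at x)"
    using dv assms(3) deriv_inv_has real_diff_of_deriv by blast
  ultimately show ?case unfolding sm_Suc by blast
qed

lemma smooth_add: "open S \<Longrightarrow> smooth_on S f \<Longrightarrow> smooth_on S g \<Longrightarrow> smooth_on S (\<lambda>x. f x + g x)"
  unfolding smooth_on_sm using sm_add by blast
lemma smooth_mult: "open S \<Longrightarrow> smooth_on S f \<Longrightarrow> smooth_on S g \<Longrightarrow> smooth_on S (\<lambda>x. f x * g x)"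
  unfolding smooth_on_sm using sm_mult by blast
lemma smooth_inverse: "open S \<Longrightarrow> smooth_on S v \<Longrightarrow> \<forall>x\<in>S. v x \<noteq> 0 \<Longrightarrow> smooth_on S (\<lambda>x. 1 / v x)"
  unfolding smooth_on_sm using sm_inverse by blast
lemma smooth_const: "smooth_on S (\<lambda>_. c)"
  unfolding smooth_on_sm using sm_const by blast
lemma smooth_deriv: "smooth_on S f \<Longrightarrow> smooth_on S (deriv f)"
  unfolding smooth_on_sm using sm_Suc by blast
lemma smooth_diff: "smooth_on S f \<Longrightarrow> x \<in> S \<Longrightarrow> f differentiable (at x)"
  unfolding smooth_on_def by (metis funpow_0)

lemma hd_add:
  assumes "open S" "smooth_on S f" "smooth_on S g" "x \<in> S"
  shows "(deriv ^^ k) (\<lambda>x. f x + g x) x = (deriv ^^ k) f x + (deriv ^^ k) g x"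
  using assms(2-4)
proof (induction k arbitrary: f g x)
  case 0 then show ?case by simp
next
  case (Suc k)
  have e: "\<forall>y\<in>S. deriv (\<lambda>x. f x + g x) y = deriv f y + deriv g y"
  proof
    fix y assume "y \<in> S"
    have "((\<lambda>x. f x + g x) has_real_derivative deriv f y + deriv g y) (at y)"
      using DERIV_add[OF deriv_real deriv_real] smooth_diff Suc.prems \<open>y\<in>S\<close> by blast
    then show "deriv (\<lambda>x. f x + g x) y = deriv f y + deriv g y" by (rule DERIV_imp_deriv)
  qed
  have "(deriv ^^ Suc k) (\<lambda>x. f x + g x) x = (deriv ^^ k) (deriv (\<lambda>x. f x + g x)) x"
    by (simp only: funpow_deriv_Suc)
  also have "\<dots> = (deriv ^^ k) (\<lambda>y. deriv f y + deriv g y) x"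
    by (rule higher_deriv_eq_open[OF assms(1) e Suc.prems(3)])
  also have "\<dots> = (deriv ^^ k) (deriv f) x + (deriv ^^ k) (deriv g) x"
    by (rule Suc.IH[OF smooth_deriv smooth_deriv]) (use Suc.prems in auto)
  also have "\<dots> = (deriv ^^ Suc k) f x + (deriv ^^ Suc k) g x"
    by (simp only: funpow_deriv_Suc)
  finally show ?case .
qed

lemma hd_cmult:
  assumes "open S" "smooth_on S f" "x \<in> S"
  shows "(deriv ^^ k) (\<lambda>x. c * f x) x = c * (deriv ^^ k) f x"
  using assms(2-3)
proof (induction k arbitrary: f x)
  case 0 then show ?case by simp
next
  case (Suc k)
  have e: "\<forall>y\<in>S. deriv (\<lambda>x. c * f x) y = c * deriv f y"
  proof
    fix y assume "y \<in> S"
    have "((\<lambda>x. c * f x) has_real_derivative c * deriv f y) (at y)"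
      using DERIV_cmult[OF deriv_real] smooth_diff Suc.prems \<open>y\<in>S\<close> by blast
    then show "deriv (\<lambda>x. c * f x) y = c * deriv f y" by (rule DERIV_imp_deriv)
  qed
  have "(deriv ^^ Suc k) (\<lambda>x. c * f x) x = (deriv ^^ k) (deriv (\<lambda>x. c * f x)) x"
    by (simp only: funpow_deriv_Suc)
  also have "\<dots> = (deriv ^^ k) (\<lambda>y. c * deriv f y) x"
    by (rule higher_deriv_eq_open[OF assms(1) e Suc.prems(2)])
  also have "\<dots> = c * (deriv ^^ k) (deriv f) x"
    by (rule Suc.IH[OF smooth_deriv]) (use Suc.prems in auto)
  also have "\<dots> = c * (deriv ^^ Suc k) f x"
    by (simp only: funpow_deriv_Suc)
  finally show ?case .
qed

lemma hd_mult_bound: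
  assumes "open S" "smooth_on S f" "smooth_on S g" "x \<in> S"
    "\<forall>j\<le>k. \<bar>(deriv ^^ j) f x\<bar> \<le> a" "\<forall>j\<le>k. \<bar>(deriv ^^ j) g x\<bar> \<le> b"
  shows "\<bar>(deriv ^^ k) (\<lambda>y. f y * g y) x\<bar> \<le> 2 ^ k * a * b"
  using assms(2,3,5,6)
proof (induction k arbitrary: f g)
  case 0
  have "\<bar>f x\<bar> \<le> a" "\<bar>g x\<bar> \<le> b" using 0 by auto
  then have "\<bar>f x\<bar> * \<bar>g x\<bar> \<le> a * b" by (simp add: mult_mono')
  then show ?case by (simp add: abs_mult)
next
  case (Suc k)
  have sf: "smooth_on S (deriv f)" and sg: "smooth_on S (deriv g)"
    using smooth_deriv Suc.prems by blast+
  have e: "\<forall>y\<in>S. deriv (\<lambda>x. f x * g x) y = deriv f y * g y + f y * deriv g y"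
  proof
    fix y assume "y \<in> S"
    have "((\<lambda>x. f x * g x) has_real_derivative deriv f y * g y + deriv g y * f y) (at y)"
      using DERIV_mult[OF deriv_real deriv_real] smooth_diff Suc.prems \<open>y\<in>S\<close> by blast
    then show "deriv (\<lambda>x. f x * g x) y = deriv f y * g y + f y * deriv g y"
      by (subst mult.commute[of "f y"]) (rule DERIV_imp_deriv)
  qed
  have "(deriv ^^ Suc k) (\<lambda>x. f x * g x) x = (deriv ^^ k) (deriv (\<lambda>x. f x * g x)) x"
    by (simp only: funpow_deriv_Suc)
  also have "\<dots> = (deriv ^^ k) (\<lambda>y. deriv f y * g y + f y * deriv g y) x"
    by (rule higher_deriv_eq_open[OF assms(1) e assms(4)])
  also have "\<dots> = (deriv ^^ k) (\<lambda>y. deriv f y * g y) x + (deriv ^^ k) (\<lambda>y. f y * deriv g y) x"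
    by (rule hd_add[OF assms(1) smooth_mult[OF assms(1) sf Suc.prems(2)]
          smooth_mult[OF assms(1) Suc.prems(1) sg] assms(4)])
  finally have eq: "(deriv ^^ Suc k) (\<lambda>x. f x * g x) x =
      (deriv ^^ k) (\<lambda>y. deriv f y * g y) x + (deriv ^^ k) (\<lambda>y. f y * deriv g y) x" .
  have fa: "\<forall>j\<le>k. \<bar>(deriv ^^ j) (deriv f) x\<bar> \<le> a"
  proof (intro allI impI)
    fix j assume "j \<le> k"
    then have "Suc j \<le> Suc k" by simp
    then have "\<bar>(deriv ^^ Suc j) f x\<bar> \<le> a" using Suc.prems(3) by blast
    then show "\<bar>(deriv ^^ j) (deriv f) x\<bar> \<le> a" by (simp only: funpow_deriv_Suc)
  qed
  have gb: "\<forall>j\<le>k. \<bar>(deriv ^^ j) (deriv g) x\<bar> \<le> b"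
  proof (intro allI impI)
    fix j assume "j \<le> k"
    then have "Suc j \<le> Suc k" by simp
    then have "\<bar>(deriv ^^ Suc j) g x\<bar> \<le> b" using Suc.prems(4) by blast
    then show "\<bar>(deriv ^^ j) (deriv g) x\<bar> \<le> b" by (simp only: funpow_deriv_Suc)
  qed
  have fa': "\<forall>j\<le>k. \<bar>(deriv ^^ j) f x\<bar> \<le> a" and gb': "\<forall>j\<le>k. \<bar>(deriv ^^ j) g x\<bar> \<le> b"
    using Suc.prems(3,4) le_SucI by blast+
  have 1: "\<bar>(deriv ^^ k) (\<lambda>y. deriv f y * g y) x\<bar> \<le> 2 ^ k * a * b"
    by (rule Suc.IH[OF sf Suc.prems(2) fa gb'])
  have 2: "\<bar>(deriv ^^ k) (\<lambda>y. f y * deriv g y) x\<bar> \<le> 2 ^ k * a * b"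
    by (rule Suc.IH[OF Suc.prems(1) sg fa' gb])
  show ?case unfolding eq using 1 2 by simp
qed

fun Dinv :: "real \<Rightarrow> real \<Rightarrow> nat \<Rightarrow> real" where
  "Dinv B c 0 = 1 / c"
| "Dinv B c (Suc k) = max (Dinv B c k) (4 ^ k * B * (Dinv B c k)\<^sup>2)"

lemma Dinv_pos: "c > 0 \<Longrightarrow> Dinv B c k > 0"
  by (induction k) auto

lemma hd_inv_bound:
  assumes "open S" "x \<in> S" "smooth_on S v" "\<forall>y\<in>S. v y \<noteq> 0" "c > 0" "\<bar>v x\<bar> \<ge> c"
    "\<forall>j\<le>k. \<bar>(deriv ^^ j) v x\<bar> \<le> B"
  shows "\<forall>j\<le>k. \<bar>(deriv ^^ j) (\<lambda>y. 1 / v y) x\<bar> \<le> Dinv B c k"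
  using assms(7)
proof (induction k)
  case 0
  have "\<bar>1 / v x\<bar> \<le> 1 / c" using assms(5,6) by (simp add: abs_div frac_le)
  then show ?case by simp
next
  case (Suc k)
  define D where "D = Dinv B c k"
  have D0: "D > 0" unfolding D_def using Dinv_pos assms(5) by blast
  have IH: "\<forall>j\<le>k. \<bar>(deriv ^^ j) (\<lambda>y. 1 / v y) x\<bar> \<le> D"
    unfolding D_def using Suc by (meson le_SucI)
  have B0: "B \<ge> 0" using Suc.prems by (meson abs_ge_zero order_trans zero_le)
  have sw: "smooth_on S (\<lambda>y. 1 / v y)" by (rule smooth_inverse[OF assms(1,3,4)])
  have sv': "smooth_on S (\<lambda>y. (-1) * deriv v y)"
    by (rule smooth_mult[OF assms(1) smooth_const smooth_deriv[OF assms(3)]])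
  have sww: "smooth_on S (\<lambda>y. (1 / v y) * (1 / v y))" by (rule smooth_mult[OF assms(1) sw sw])
  have e: "\<forall>y\<in>S. deriv (\<lambda>x. 1 / v x) y = ((-1) * deriv v y) * ((1 / v y) * (1 / v y))"
    using smooth_diff[OF assms(3)] assms(4) deriv_inv_has DERIV_imp_deriv by fastforce
  have last: "\<bar>(deriv ^^ Suc k) (\<lambda>y. 1 / v y) x\<bar> \<le> 4 ^ k * B * D\<^sup>2"
  proof -
    have "(deriv ^^ Suc k) (\<lambda>y. 1 / v y) x = (deriv ^^ k) (deriv (\<lambda>y. 1 / v y)) x"
      by (simp only: funpow_deriv_Suc)
    also have "\<dots> = (deriv ^^ k) (\<lambda>y. ((-1) * deriv v y) * ((1 / v y) * (1 / v y))) x"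
      by (rule higher_deriv_eq_open[OF assms(1) e assms(2)])
    finally have eq: "(deriv ^^ Suc k) (\<lambda>y. 1 / v y) x =
       (deriv ^^ k) (\<lambda>y. ((-1) * deriv v y) * ((1 / v y) * (1 / v y))) x" .
    have b1: "\<forall>j\<le>k. \<bar>(deriv ^^ j) (\<lambda>y. (-1) * deriv v y) x\<bar> \<le> B"
    proof (intro allI impI)
      fix j assume "j \<le> k"
      then have "Suc j \<le> Suc k" by simp
      then have "\<bar>(deriv ^^ Suc j) v x\<bar> \<le> B" using Suc.prems by blast
      moreover have "(deriv ^^ j) (\<lambda>y. (-1) * deriv v y) x = (-1) * (deriv ^^ j) (deriv v) x"
        by (rule hd_cmult[OF assms(1) smooth_deriv[OF assms(3)] assms(2)])
      ultimately show "\<bar>(deriv ^^ j) (\<lambda>y. (-1) * deriv v y) x\<bar> \<le> B"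
        by (simp only: funpow_deriv_Suc)
    qed
    have b2: "\<forall>j\<le>k. \<bar>(deriv ^^ j) (\<lambda>y. (1 / v y) * (1 / v y)) x\<bar> \<le> 2 ^ k * D * D"
    proof (intro allI impI)
      fix j assume "j \<le> k"
      have "\<forall>i\<le>j. \<bar>(deriv ^^ i) (\<lambda>y. 1 / v y) x\<bar> \<le> D" using IH \<open>j\<le>k\<close> by auto
      then have "\<bar>(deriv ^^ j) (\<lambda>y. (1 / v y) * (1 / v y)) x\<bar> \<le> 2 ^ j * D * D"
        using hd_mult_bound[OF assms(1) sw sw assms(2)] by blast
      moreover have "(2::real) ^ j * D * D \<le> 2 ^ k * D * D"
        using \<open>j\<le>k\<close> D0 by (simp add: power_increasing)
      ultimately show "\<bar>(deriv ^^ j) (\<lambda>y. (1 / v y) * (1 / v y)) x\<bar> \<le> 2 ^ k * D * D" by linarith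
    qed
    have "\<bar>(deriv ^^ k) (\<lambda>y. ((-1) * deriv v y) * ((1 / v y) * (1 / v y))) x\<bar> \<le> 2 ^ k * B * (2 ^ k * D * D)"
      by (rule hd_mult_bound[OF assms(1) sv' sww assms(2) b1 b2])
    also have "\<dots> = 4 ^ k * B * D\<^sup>2"
      by (simp add: power2_eq_square power_mult_distrib[symmetric])
    finally show ?thesis unfolding eq .
  qed
  show ?case
  proof (intro allI impI)
    fix j assume "j \<le> Suc k"
    then consider "j \<le> k" | "j = Suc k" by linarith
    then show "\<bar>(deriv ^^ j) (\<lambda>y. 1 / v y) x\<bar> \<le> Dinv B c (Suc k)"
    proof cases
      case 1 then show ?thesis using IH unfolding D_def by fastforce
    next
      case 2 then show ?thesis using last unfolding D_def by simp
    qed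
  qed
qed

lemma cx_has_deriv:
  assumes "F holomorphic_on U" "open U" "complex_of_real x \<in> U"
  shows "((\<lambda>t. Re (F (of_real t))) has_real_derivative Re (deriv F (of_real x))) (at x)"
proof -
  have "(F has_field_derivative deriv F (of_real x)) (at (of_real x))"
    by (rule holomorphic_derivI[OF assms])
  then have "((\<lambda>t. F (of_real t)) has_vector_derivative deriv F (of_real x)) (at x within UNIV)"
    by (rule has_vector_derivative_real_field)
  then show ?thesis using has_field_derivative_Re by simp
qed

lemma cx_higher:
  assumes "F holomorphic_on U" "open U" "open T" "\<forall>t\<in>T. complex_of_real t \<in> U" "x \<in> T"
  shows "(deriv ^^ k) (\<lambda>t. Re (F (of_real t))) x = Re ((deriv ^^ k) F (of_real x))"
  using assms(1,5)
proof (induction k arbitrary: F x)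
  case 0 then show ?case by simp
next
  case (Suc k)
  have e: "\<forall>y\<in>T. deriv (\<lambda>t. Re (F (of_real t))) y = Re (deriv F (of_real y))"
    using cx_has_deriv[OF Suc.prems(1) assms(2)] assms(4) DERIV_imp_deriv by blast
  have "(deriv ^^ Suc k) (\<lambda>t. Re (F (of_real t))) x = (deriv ^^ k) (deriv (\<lambda>t. Re (F (of_real t)))) x"
    by (simp only: funpow_deriv_Suc)
  also have "\<dots> = (deriv ^^ k) (\<lambda>t. Re (deriv F (of_real t))) x"
    by (rule higher_deriv_eq_open[OF assms(3) e Suc.prems(2)])
  also have "\<dots> = Re ((deriv ^^ k) (deriv F) (of_real x))"
    by (rule Suc.IH[OF holomorphic_deriv[OF Suc.prems(1) assms(2)] Suc.prems(2)])
  also have "\<dots> = Re ((deriv ^^ Suc k) F (of_real x))"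
    by (simp only: funpow_Suc_right o_def)
  finally show ?case .
qed

lemma cx_smooth:
  assumes "F holomorphic_on U" "open U" "open T" "\<forall>t\<in>T. complex_of_real t \<in> U"
  shows "smooth_on T (\<lambda>t. Re (F (of_real t)))"
  unfolding smooth_on_def
proof (intro allI ballI)
  fix k x assume "x \<in> T"
  have e: "\<forall>y\<in>T. (\<lambda>t. Re ((deriv ^^ k) F (of_real t))) y = (deriv ^^ k) (\<lambda>t. Re (F (of_real t))) y"
    using cx_higher[OF assms] by simp
  have h: "(deriv ^^ k) F holomorphic_on U" by (rule holomorphic_higher_deriv[OF assms(1,2)])
  have "(\<lambda>t. Re ((deriv ^^ k) F (of_real t))) differentiable (at x)"
    using cx_has_deriv[OF h assms(2)] assms(4) \<open>x\<in>T\<close> real_diff_of_deriv by blast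
  then show "(deriv ^^ k) (\<lambda>t. Re (F (of_real t))) differentiable (at x)"
    by (rule differentiable_eq_open[OF assms(3) e \<open>x\<in>T\<close>])
qed

lemma cx_cauchy:
  assumes "F holomorphic_on U" "open U" "open T" "\<forall>t\<in>T. complex_of_real t \<in> U" "x \<in> T"
    "cball (complex_of_real x) r \<subseteq> U" "r > 0" "M > 0"
    "\<forall>z\<in>cball (complex_of_real x) r. cmod (F z) \<le> M"
  shows "\<bar>(deriv ^^ k) (\<lambda>t. Re (F (of_real t))) x\<bar> \<le> fact k * (2 * M) / r ^ k"
proof (cases "k = 0")
  case True
  have "\<bar>Re (F (of_real x))\<bar> \<le> M"
  proof -
    have "complex_of_real x \<in> cball (complex_of_real x) r" using assms(7) by simp
    then have "cmod (F (of_real x)) \<le> M" using assms(9) by blast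
    then show ?thesis using abs_Re_le_cmod[of "F (of_real x)"] by linarith
  qed
  then show ?thesis using True assms(8) by simp
next
  case False
  have "cmod ((deriv ^^ k) F (of_real x)) \<le> fact k * (2 * M) / r ^ k"
  proof (rule Cauchy_higher_deriv_bound[where y=0])
    show "F holomorphic_on ball (complex_of_real x) r"
      using assms(1,6) ball_subset_cball holomorphic_on_subset by blast
    show "continuous_on (cball (complex_of_real x) r) F"
      using assms(1,2,6) holomorphic_on_imp_continuous_on continuous_on_subset by blast
    show "F w \<in> ball 0 (2 * M)" if "w \<in> ball (complex_of_real x) r" for w
    proof -
      have "w \<in> cball (complex_of_real x) r" using that by simp
      then have "cmod (F w) \<le> M" using assms(9) by blast
      then show ?thesis using assms(8) by (simp add: dist_norm)
    qed
  qed (use assms(7) False in auto)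
  moreover have "(deriv ^^ k) (\<lambda>t. Re (F (of_real t))) x = Re ((deriv ^^ k) F (of_real x))"
    by (rule cx_higher[OF assms(1-5)])
  ultimately show ?thesis using abs_Re_le_cmod order_trans by metis
qed

definition sqm :: "real \<Rightarrow> complex \<Rightarrow> complex" where
  "sqm m z = csqrt (z + of_real (m\<^sup>2))"

definition Am :: "real \<Rightarrow> complex \<Rightarrow> complex" where
  "Am m z = 1 / (sqm m z + of_real m)"

lemma Re_sqm: assumes "0 < Re z" shows "sqrt (Re z + m\<^sup>2) \<le> Re (sqm m z)"
proof -
  let ?w = "z + of_real (m\<^sup>2)"
  have "Re ?w \<le> cmod ?w" by (rule complex_Re_le_cmod)
  then have "Re ?w \<le> (cmod ?w + Re ?w) / 2" by simp
  then have "sqrt (Re ?w) \<le> sqrt ((cmod ?w + Re ?w) / 2)" by (rule real_sqrt_le_mono)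
  then show ?thesis unfolding sqm_def by simp
qed

lemma sqm_sq: "(sqm m z)\<^sup>2 = z + of_real (m\<^sup>2)"
  unfolding sqm_def by simp

lemma hol_sqm: "sqm m holomorphic_on {z. 0 < Re z}"
proof -
  have "(\<lambda>z. csqrt (z + of_real (m\<^sup>2))) holomorphic_on {z. 0 < Re z}"
  proof (rule holomorphic_on_csqrt')
    show "(\<lambda>z. z + complex_of_real (m\<^sup>2)) holomorphic_on {z. 0 < Re z}"
      by (intro holomorphic_intros)
    show "z + complex_of_real (m\<^sup>2) \<notin> \<real>\<^sub>\<le>\<^sub>0" if "z \<in> {z. 0 < Re z}" for z
    proof -
      have "0 < Re (z + complex_of_real (m\<^sup>2))" using that by (simp add: add_pos_nonneg)
      then show ?thesis by (simp add: complex_nonpos_Reals_iff)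
    qed
  qed
  then show ?thesis unfolding sqm_def[abs_def] .
qed

lemma Re_den: assumes "0 < Re z" "0 \<le> m"
  shows "sqrt (Re z + m\<^sup>2) + m \<le> Re (sqm m z + of_real m)" "2 * m \<le> Re (sqm m z + of_real m)"
proof -
  show 1: "sqrt (Re z + m\<^sup>2) + m \<le> Re (sqm m z + of_real m)"
    using Re_sqm[OF assms(1), of m] by simp
  have "sqrt (m\<^sup>2) \<le> sqrt (Re z + m\<^sup>2)" using assms(1) by (intro real_sqrt_le_mono) simp
  then have "m \<le> sqrt (Re z + m\<^sup>2)" using assms(2) by simp
  then show "2 * m \<le> Re (sqm m z + of_real m)" using 1 by simp
qed

lemma den_nz: assumes "0 < Re z" "0 < m" shows "sqm m z + of_real m \<noteq> 0"
proof
  assume "sqm m z + of_real m = 0"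
  then have "Re (sqm m z + of_real m) = 0" by simp
  then show False using Re_den(2)[OF assms(1) less_imp_le[OF assms(2)]] assms(2) by linarith
qed

lemma hol_Am: assumes "0 < m" shows "Am m holomorphic_on {z. 0 < Re z}"
proof -
  have "(\<lambda>z. 1 / (sqm m z + of_real m)) holomorphic_on {z. 0 < Re z}"
    by (intro holomorphic_intros hol_sqm) (use den_nz assms in auto)
  then show ?thesis unfolding Am_def[abs_def] .
qed

lemma cmod_Am: assumes "0 < Re z" "0 < m"
  shows "cmod (Am m z) \<le> 1 / (sqrt (Re z + m\<^sup>2) + m)"
proof -
  have a: "sqrt (Re z + m\<^sup>2) + m \<le> Re (sqm m z + of_real m)" using Re_den(1)[OF assms(1)] assms(2) by simp
  have b: "0 < sqrt (Re z + m\<^sup>2) + m" using assms by (simp add: add_pos_nonneg)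
  have c: "Re (sqm m z + of_real m) \<le> cmod (sqm m z + of_real m)" by (rule complex_Re_le_cmod)
  have "cmod (Am m z) = 1 / cmod (sqm m z + of_real m)" unfolding Am_def by (simp add: norm_divide)
  also have "\<dots> \<le> 1 / (sqrt (Re z + m\<^sup>2) + m)"
    using a b c by (intro frac_le) auto
  finally show ?thesis .
qed

lemma zA: assumes "0 < Re z" "0 < m" shows "z * Am m z = sqm m z - of_real m"
proof -
  have nz: "sqm m z + of_real m \<noteq> 0" by (rule den_nz[OF assms])
  have "z = (sqm m z)\<^sup>2 - of_real (m\<^sup>2)" using sqm_sq[of m z] by simp
  also have "\<dots> = (sqm m z - of_real m) * (sqm m z + of_real m)"
    by (simp add: power2_eq_square algebra_simps)
  finally have "z = (sqm m z - of_real m) * (sqm m z + of_real m)" .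
  then show ?thesis unfolding Am_def using nz by (simp add: field_simps)
qed

lemma Re_zA: assumes "0 < Re z" "0 < m" shows "0 \<le> Re (z * Am m z)"
proof -
  have "sqrt (m\<^sup>2) \<le> sqrt (Re z + m\<^sup>2)" using assms(1) by (intro real_sqrt_le_mono) simp
  then have "m \<le> Re (sqm m z)" using Re_sqm[OF assms(1), of m] assms(2) by simp
  then show ?thesis using zA[OF assms] by simp
qed

lemma sqm_real: assumes "0 < x" shows "sqm m (of_real x) = of_real (sqrt (x + m\<^sup>2))"
proof -
  have "complex_of_real x + complex_of_real (m\<^sup>2) = complex_of_real (x + m\<^sup>2)" by simp
  moreover have "0 \<le> x + m\<^sup>2" using assms by simp
  ultimately show ?thesis unfolding sqm_def by (simp del: of_real_add of_real_power)
qed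

lemma Am_real: assumes "0 < x" shows "Am m (of_real x) = of_real (1 / (sqrt (x + m\<^sup>2) + m))"
  unfolding Am_def sqm_real[OF assms] by simp

lemma sq_facts: assumes "0 < x" "0 < m"
  shows "(sqrt (x + m\<^sup>2) - m) * (sqrt (x + m\<^sup>2) + m) = x" "sqrt (x + m\<^sup>2) > m"
proof -
  have "(sqrt (x + m\<^sup>2))\<^sup>2 = x + m\<^sup>2" using assms by simp
  then show "(sqrt (x + m\<^sup>2) - m) * (sqrt (x + m\<^sup>2) + m) = x"
    by (simp add: power2_eq_square algebra_simps)
  have "sqrt (m\<^sup>2) < sqrt (x + m\<^sup>2)" using assms by (intro real_sqrt_less_mono) simp
  then show "sqrt (x + m\<^sup>2) > m" using assms by simp
qed

lemma cball_Re:
  assumes "z \<in> cball (complex_of_real c) r"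
  shows "c - r \<le> Re z" "cmod z \<le> \<bar>c\<bar> + r"
proof -
  have d: "cmod (z - of_real c) \<le> r" using assms by (simp add: dist_norm norm_minus_commute)
  have "\<bar>Re (z - of_real c)\<bar> \<le> cmod (z - of_real c)" by (rule abs_Re_le_cmod)
  then show "c - r \<le> Re z" using d by simp
  have "cmod z \<le> cmod (of_real c :: complex) + cmod (z - of_real c)" by (rule norm_triangle_sub)
  then show "cmod z \<le> \<bar>c\<bar> + r" using d by simp
qed

lemma open_Re_gt: "open {z::complex. 0 < Re z}"
  using open_halfspace_Re_gt[of 0] by simp

lemma cball_sub_U: assumes "r < c" shows "cball (complex_of_real c) r \<subseteq> {z. 0 < Re z}"
  using cball_Re(1) assms by fastforce

lemma alg1: fixes m s :: real assumes "0 < m" "m < s"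
  shows "1/((s-m)*(s+m)) - 1/(2*m*(s-m)) = -(1/(s+m))/(2*m)"
proof -
  have a: "s - m \<noteq> 0" "s + m \<noteq> 0" "m \<noteq> 0" using assms by auto
  have "1/((s-m)*(s+m)) - 1/(2*m*(s-m)) = (2*m - (s+m)) / (2*m*(s-m)*(s+m))"
    using a by (simp add: divide_simps)
  also have "2*m - (s+m) = -(s-m)" by simp
  also have "-(s-m) / (2*m*(s-m)*(s+m)) = -(1/(s+m))/(2*m)" using a by (simp add: divide_simps)
  finally show ?thesis .
qed
lemma alg2: fixes m s x :: real assumes "0 < m" "m < s" "(s-m)*(s+m) = x"
  shows "2*m*x*(1/(s+m)) = 2*m*(s-m)"
proof -
  have a: "s + m \<noteq> 0" using assms by auto
  show ?thesis unfolding assms(3)[symmetric] using a by simp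
qed
lemma alg2b: fixes m s x :: real assumes "0 < m" "m < s" "(s-m)*(s+m) = x"
  shows "(x*(1/(s+m)))^2 = (s-m)^2"
proof -
  have a: "s + m \<noteq> 0" using assms by auto
  show ?thesis unfolding assms(3)[symmetric] using a by simp
qed
lemma alg3: fixes m s x c :: real assumes "x + c \<noteq> 0" "2*m*(s-m)+c \<noteq> 0" "(s-m)*(s+m) = x"
  shows "1/(x+c) - 1/(2*m*(s-m)+c) = (- ((s-m)^2)) * ((1/(x+c)) * (1/(2*m*(s-m)+c)))"
proof -
  have "1/(x+c) - 1/(2*m*(s-m)+c) = ((2*m*(s-m)+c) - (x+c)) * ((1/(x+c)) * (1/(2*m*(s-m)+c)))"
    using assms(1,2) by (simp add: divide_simps)
  also have "(2*m*(s-m)+c) - (x+c) = - ((s-m)^2)" unfolding assms(3)[symmetric]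
    by (simp add: power2_eq_square algebra_simps)
  finally show ?thesis .
qed

lemma one_div_le: "0 < y \<Longrightarrow> y \<le> x \<Longrightarrow> 1 / x \<le> 1 / (y::real)"
  by (rule frac_le) auto

lemma large_region:
  fixes chi :: "real \<Rightarrow> real"
  assumes "lam1 > 0" "\<forall>s>lam1. chi s = 0" "m \<ge> 2" "l > lam1"
  shows "\<bar>(deriv ^^ k) (\<lambda>x. Pm chi m x / Pinf chi x) l\<bar> \<le> fact k * 2 ^ (k + 1) / l ^ k"
    "\<bar>(deriv ^^ k) (\<lambda>x. 1 / Pinf chi x - 1 / Pm chi m x) l\<bar>
        \<le> fact k * 2 ^ (k + 1) / l ^ k * min (1 / m\<^sup>2) (1 / (m * sqrt (l + 1)))"
proof -
  define T where "T = {lam1<..}"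
  define U where "U = {z::complex. 0 < Re z}"
  have oT: "open T" and oU: "open U" unfolding T_def U_def using open_Re_gt by auto
  have m0: "0 < m" using assms(3) by simp
  have l0: "0 < l" using assms(1,4) by simp
  have TU: "\<forall>t\<in>T. complex_of_real t \<in> U" unfolding T_def U_def using assms(1) by auto
  have lT: "l \<in> T" unfolding T_def using assms(4) by simp
  have r0: "0 < l / 2" using l0 by simp
  have cb: "cball (complex_of_real l) (l / 2) \<subseteq> U" unfolding U_def by (rule cball_sub_U) (use l0 in simp)
  have ReZ: "l / 2 \<le> Re z" if "z \<in> cball (complex_of_real l) (l / 2)" for z
    using cball_Re(1)[OF that] by simp
  have den: "2 * m \<le> sqrt (Re z + m\<^sup>2) + m" "sqrt (l + 1) \<le> 2 * sqrt (Re z + m\<^sup>2)"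
    if "z \<in> cball (complex_of_real l) (l / 2)" for z
  proof -
    have z0: "0 < Re z" using ReZ[OF that] l0 by simp
    have "sqrt (m\<^sup>2) \<le> sqrt (Re z + m\<^sup>2)" using z0 by (intro real_sqrt_le_mono) simp
    then show "2 * m \<le> sqrt (Re z + m\<^sup>2) + m" using m0 by simp
    have "2 * 2 \<le> m * m" using mult_mono[OF assms(3) assms(3)] m0 by simp
    then have "m\<^sup>2 \<ge> 4" by (simp add: power2_eq_square)
    then have "l + 1 \<le> 2\<^sup>2 * (Re z + m\<^sup>2)" using ReZ[OF that] l0 by (simp; linarith)
    then have "sqrt (l + 1) \<le> sqrt (2\<^sup>2 * (Re z + m\<^sup>2))" by (rule real_sqrt_le_mono)
    also have "sqrt (2\<^sup>2 * (Re z + m\<^sup>2)) = 2 * sqrt (Re z + m\<^sup>2)"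
      by (simp only: real_sqrt_mult real_sqrt_abs)
    finally show "sqrt (l + 1) \<le> 2 * sqrt (Re z + m\<^sup>2)" .
  qed
  have AmB: "cmod (Am m z) \<le> 1 / (sqrt (Re z + m\<^sup>2) + m)" if "z \<in> cball (complex_of_real l) (l / 2)" for z
    using cmod_Am[OF _ m0] ReZ[OF that] l0 by simp
  define FL where "FL = (\<lambda>z. complex_of_real (2 * m) * Am m z)"
  have hFL: "FL holomorphic_on U" unfolding FL_def U_def by (intro holomorphic_intros hol_Am m0)
  have eqL: "\<forall>x\<in>T. Pm chi m x / Pinf chi x = Re (FL (of_real x))"
  proof
    fix x assume "x \<in> T"
    then have x0: "0 < x" and c0: "chi x = 0" unfolding T_def using assms(1,2) by auto
    define s where "s = sqrt (x + m\<^sup>2)"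
    have f: "(s - m) * (s + m) = x" "s > m" unfolding s_def using sq_facts[OF x0 m0] by auto
    have "Pm chi m x / Pinf chi x = 2 * m * (s - m) / ((s - m) * (s + m))"
      unfolding Pm_def Pinf_def c0 s_def[symmetric] using f(1) by simp
    also have "\<dots> = 2 * m / (s + m)" using f(2) by simp
    also have "\<dots> = Re (FL (of_real x))" unfolding FL_def Am_real[OF x0] s_def by simp
    finally show "Pm chi m x / Pinf chi x = Re (FL (of_real x))" .
  qed
  have "\<bar>(deriv ^^ k) (\<lambda>t. Re (FL (of_real t))) l\<bar> \<le> fact k * (2 * 1) / (l / 2) ^ k"
  proof (rule cx_cauchy[OF hFL oU oT TU lT cb r0])
    show "\<forall>z\<in>cball (complex_of_real l) (l / 2). cmod (FL z) \<le> 1"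
    proof
      fix z assume z: "z \<in> cball (complex_of_real l) (l / 2)"
      have "cmod (FL z) = 2 * m * cmod (Am m z)" unfolding FL_def using m0 by (simp add: norm_mult)
      also have "\<dots> \<le> 2 * m * (1 / (sqrt (Re z + m\<^sup>2) + m))"
        using mult_left_mono[OF AmB[OF z], of "2*m"] m0 by simp
      also have "\<dots> = 2 * m / (sqrt (Re z + m\<^sup>2) + m)" by simp
      also have "\<dots> \<le> 1"
        using den(1)[OF z] m0 divide_le_eq_1_pos[of "sqrt (Re z + m\<^sup>2) + m" "2*m"] by simp
      finally show "cmod (FL z) \<le> 1" .
    qed
  qed simp
  moreover have "(deriv ^^ k) (\<lambda>x. Pm chi m x / Pinf chi x) l = (deriv ^^ k) (\<lambda>t. Re (FL (of_real t))) l"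
    by (rule higher_deriv_eq_open[OF oT eqL lT])
  moreover have "fact k * (2 * 1) / (l / 2) ^ k = fact k * 2 ^ (k + 1) / l ^ k"
    by (simp add: power_divide)
  ultimately show "\<bar>(deriv ^^ k) (\<lambda>x. Pm chi m x / Pinf chi x) l\<bar> \<le> fact k * 2 ^ (k + 1) / l ^ k" by simp
  define mn where "mn = min (1 / m\<^sup>2) (1 / (m * sqrt (l + 1)))"
  have mn0: "0 < mn" unfolding mn_def using m0 l0 by (simp add: add_pos_pos)
  define GL where "GL = (\<lambda>z. - Am m z / complex_of_real (2 * m))"
  have hGL: "GL holomorphic_on U" unfolding GL_def U_def
    by (intro holomorphic_intros hol_Am m0) (use m0 in simp)
  have eqG: "\<forall>x\<in>T. 1 / Pinf chi x - 1 / Pm chi m x = Re (GL (of_real x))"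
  proof
    fix x assume "x \<in> T"
    then have x0: "0 < x" and c0: "chi x = 0" unfolding T_def using assms(1,2) by auto
    define s where "s = sqrt (x + m\<^sup>2)"
    have f: "(s - m) * (s + m) = x" "s > m" unfolding s_def using sq_facts[OF x0 m0] by auto
    have "1 / Pinf chi x - 1 / Pm chi m x = 1 / ((s - m) * (s + m)) - 1 / (2 * m * (s - m))"
      unfolding Pm_def Pinf_def c0 s_def[symmetric] using f(1) by simp
    also have "\<dots> = - (1 / (s + m)) / (2 * m)" by (rule alg1[OF m0 f(2)])
    also have "\<dots> = Re (GL (of_real x))" unfolding GL_def Am_real[OF x0] s_def by simp
    finally show "1 / Pinf chi x - 1 / Pm chi m x = Re (GL (of_real x))" .
  qed
  have "\<bar>(deriv ^^ k) (\<lambda>t. Re (GL (of_real t))) l\<bar> \<le> fact k * (2 * mn) / (l / 2) ^ k"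
  proof (rule cx_cauchy[OF hGL oU oT TU lT cb r0 mn0])
    show "\<forall>z\<in>cball (complex_of_real l) (l / 2). cmod (GL z) \<le> mn"
    proof
      fix z assume z: "z \<in> cball (complex_of_real l) (l / 2)"
      define q where "q = sqrt (Re z + m\<^sup>2)"
      have q: "2 * m \<le> q + m" "sqrt (l + 1) \<le> 2 * q" using den[OF z] unfolding q_def by auto
      have "cmod (GL z) = cmod (Am m z) / (2 * m)" unfolding GL_def using m0 by (simp add: norm_divide)
      also have "\<dots> \<le> (1 / (q + m)) / (2 * m)" using divide_right_mono[OF AmB[OF z], of "2*m"] m0 unfolding q_def by simp
      also have "\<dots> \<le> mn" unfolding mn_def
      proof (rule min.boundedI)
        have e: "1 / (q + m) / (2 * m) = 1 / ((q + m) * (2 * m))" by simp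
        have "m * m \<le> (q + m) * (2 * m)" using mult_right_mono[OF _ less_imp_le[OF m0], of m "(q+m)*2"] q(1) m0
          by simp
        then have "m\<^sup>2 \<le> (q + m) * (2 * m)" by (simp add: power2_eq_square)
        moreover have "0 < m\<^sup>2" using m0 by simp
        ultimately show "1 / (q + m) / (2 * m) \<le> 1 / m\<^sup>2" unfolding e by (rule one_div_le[rotated])
        have "sqrt (l + 1) \<le> 2 * q + 2 * m" using q m0 by linarith
        then have "m * sqrt (l + 1) \<le> m * (2 * q + 2 * m)" using m0 by simp
        also have "\<dots> = (q + m) * (2 * m)" by (simp add: algebra_simps)
        finally have "m * sqrt (l + 1) \<le> (q + m) * (2 * m)" .
        moreover have "0 < m * sqrt (l + 1)" using m0 l0 by (simp add: add_pos_pos)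
        ultimately show "1 / (q + m) / (2 * m) \<le> 1 / (m * sqrt (l + 1))" unfolding e by (rule one_div_le[rotated])
      qed
      finally show "cmod (GL z) \<le> mn" .
    qed
  qed
  moreover have "(deriv ^^ k) (\<lambda>x. 1 / Pinf chi x - 1 / Pm chi m x) l = (deriv ^^ k) (\<lambda>t. Re (GL (of_real t))) l"
    by (rule higher_deriv_eq_open[OF oT eqG lT])
  moreover have "fact k * (2 * mn) / (l / 2) ^ k = fact k * 2 ^ (k + 1) / l ^ k * mn"
    by (simp add: power_divide)
  ultimately show "\<bar>(deriv ^^ k) (\<lambda>x. 1 / Pinf chi x - 1 / Pm chi m x) l\<bar>
        \<le> fact k * 2 ^ (k + 1) / l ^ k * min (1 / m\<^sup>2) (1 / (m * sqrt (l + 1)))"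
    unfolding mn_def by simp
qed

lemma w_sq: assumes "0 < Re z" "0 < m"
  shows "z = (z * Am m z)\<^sup>2 + complex_of_real (2 * m) * (z * Am m z)"
proof -
  have "z = (sqm m z)\<^sup>2 - of_real (m\<^sup>2)" using sqm_sq[of m z] by simp
  also have "sqm m z = z * Am m z + of_real m" using zA[OF assms] by simp
  finally show ?thesis by (simp add: power2_eq_square algebra_simps)
qed

lemma mn_ge: assumes "0 < m" "1 \<le> m" "0 \<le> l" "l \<le> L"
  shows "1 / m\<^sup>2 \<le> sqrt (L + 1) * min (1 / m\<^sup>2) (1 / (m * sqrt (l + 1)))"
proof -
  have K: "1 \<le> sqrt (L + 1)" using assms by simp
  have K2: "sqrt (l + 1) \<le> sqrt (L + 1)" using assms by simp
  have l1: "0 < sqrt (l + 1)" using assms by simp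
  have a: "1 / m\<^sup>2 \<le> sqrt (L + 1) * (1 / m\<^sup>2)" using divide_right_mono[OF K, of "m\<^sup>2"] by simp
  have "m * sqrt (l + 1) \<le> m * m * sqrt (L + 1)"
  proof -
    have "m * sqrt (l + 1) \<le> m * sqrt (L + 1)" using K2 assms(1) by simp
    also have "\<dots> \<le> m * m * sqrt (L + 1)" using assms(2) K by simp
    finally show ?thesis .
  qed
  then have b: "1 / m\<^sup>2 \<le> sqrt (L + 1) * (1 / (m * sqrt (l + 1)))"
    using assms(1) l1 K by (simp add: divide_simps power2_eq_square mult.commute mult.left_commute)
  show ?thesis using a b by (simp add: min_def)
qed

lemma small_region:
  fixes chi :: "real \<Rightarrow> real"
  assumes "lam1 > 0" "\<forall>s. 0 \<le> s \<and> s < lam1 / 2 \<longrightarrow> chi s = 1" "m \<ge> 2" "0 < l" "l < lam1 / 2"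
  shows "\<bar>(deriv ^^ k) (\<lambda>x. Pm chi m x / Pinf chi x) l\<bar> \<le> fact k * 2 ^ (k + 1) * (lam1 + 1) / l ^ k"
    "\<bar>(deriv ^^ k) (\<lambda>x. 1 / Pinf chi x - 1 / Pm chi m x) l\<bar>
        \<le> fact k * 2 ^ (k + 1) * ((lam1 + 1)\<^sup>2 * sqrt (lam1 + 1)) / l ^ k * min (1 / m\<^sup>2) (1 / (m * sqrt (l + 1)))"
proof -
  define T where "T = {0<..<lam1 / 2}"
  define U where "U = {z::complex. 0 < Re z}"
  have oT: "open T" and oU: "open U" unfolding T_def U_def using open_Re_gt by auto
  have m0: "0 < m" using assms(3) by simp
  have l0: "0 < l" using assms(4) by simp
  have TU: "\<forall>t\<in>T. complex_of_real t \<in> U" unfolding T_def U_def by auto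
  have lT: "l \<in> T" unfolding T_def using assms(4,5) by simp
  have r0: "0 < l / 2" using l0 by simp
  have cb: "cball (complex_of_real l) (l / 2) \<subseteq> U" unfolding U_def by (rule cball_sub_U) (use l0 in simp)
  have ReZ: "l / 2 \<le> Re z" "cmod z \<le> lam1" if "z \<in> cball (complex_of_real l) (l / 2)" for z
    using cball_Re[OF that] l0 assms(5) by auto
  have z0: "0 < Re z" if "z \<in> cball (complex_of_real l) (l / 2)" for z
    using ReZ(1)[OF that] l0 by simp
  have AmB: "cmod (Am m z) \<le> 1 / (2 * m)" if "z \<in> cball (complex_of_real l) (l / 2)" for z
  proof -
    have "sqrt (m\<^sup>2) \<le> sqrt (Re z + m\<^sup>2)" using z0[OF that] by (intro real_sqrt_le_mono) simp
    then have "2 * m \<le> sqrt (Re z + m\<^sup>2) + m" using m0 by simp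
    then have "1 / (sqrt (Re z + m\<^sup>2) + m) \<le> 1 / (2 * m)" using m0 by (intro one_div_le) auto
    then show ?thesis using cmod_Am[OF z0[OF that] m0] by linarith
  qed
  have wB: "cmod (z * Am m z) \<le> cmod z / (2 * m)" if "z \<in> cball (complex_of_real l) (l / 2)" for z
    using mult_left_mono[OF AmB[OF that], of "cmod z"] by (simp add: norm_mult)
  have den1: "1 \<le> cmod (z + 1)" if "z \<in> cball (complex_of_real l) (l / 2)" for z
    using complex_Re_le_cmod[of "z + 1"] z0[OF that] by simp
  have den2: "1 \<le> cmod (complex_of_real (2 * m) * z * Am m z + 1)" if "z \<in> cball (complex_of_real l) (l / 2)" for z
  proof -
    have "0 \<le> Re (z * Am m z)" by (rule Re_zA[OF z0[OF that] m0])
    then have "1 \<le> Re (complex_of_real (2 * m) * z * Am m z + 1)" using m0 by (simp add: mult.assoc)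
    then show ?thesis using complex_Re_le_cmod by (meson order_trans)
  qed
  have nz1: "z + 1 \<noteq> 0" if "z \<in> U" for z using that unfolding U_def by (auto simp: complex_eq_iff)
  have nz2: "complex_of_real (2 * m) * z * Am m z + 1 \<noteq> 0" if "z \<in> U" for z
  proof
    assume "complex_of_real (2 * m) * z * Am m z + 1 = 0"
    then have "Re (complex_of_real (2 * m) * z * Am m z + 1) = 0" by simp
    moreover have "0 \<le> Re (z * Am m z)" using Re_zA[OF _ m0] that unfolding U_def by simp
    then have "1 \<le> Re (complex_of_real (2 * m) * z * Am m z + 1)" using m0 by (simp add: mult.assoc)
    ultimately show False by linarith
  qed
  have hA: "Am m holomorphic_on U" unfolding U_def by (rule hol_Am[OF m0])
  define FS where "FS = (\<lambda>z. (complex_of_real (2 * m) * z * Am m z + 1) / (z + 1))"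
  have hFS: "FS holomorphic_on U" unfolding FS_def
    by (intro holomorphic_intros hA) (use nz1 in auto)
  have eqL: "\<forall>x\<in>T. Pm chi m x / Pinf chi x = Re (FS (of_real x))"
  proof
    fix x assume "x \<in> T"
    then have x0: "0 < x" and c0: "chi x = 1" unfolding T_def using assms(2) by auto
    define s where "s = sqrt (x + m\<^sup>2)"
    have f: "(s - m) * (s + m) = x" "s > m" unfolding s_def using sq_facts[OF x0 m0] by auto
    have "Re (FS (of_real x)) = (2 * m * x * (1 / (s + m)) + 1) / (x + 1)"
      unfolding FS_def Am_real[OF x0] s_def by (simp del: of_real_add)
    also have "\<dots> = (2 * m * (s - m) + 1) / (x + 1)" unfolding alg2[OF m0 f(2) f(1)] ..
    also have "\<dots> = Pm chi m x / Pinf chi x" unfolding Pm_def Pinf_def c0 s_def ..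
    finally show "Pm chi m x / Pinf chi x = Re (FS (of_real x))" by simp
  qed
  have "\<bar>(deriv ^^ k) (\<lambda>t. Re (FS (of_real t))) l\<bar> \<le> fact k * (2 * (lam1 + 1)) / (l / 2) ^ k"
  proof (rule cx_cauchy[OF hFS oU oT TU lT cb r0])
    show "\<forall>z\<in>cball (complex_of_real l) (l / 2). cmod (FS z) \<le> lam1 + 1"
    proof
      fix z assume z: "z \<in> cball (complex_of_real l) (l / 2)"
      have "cmod (complex_of_real (2 * m) * z * Am m z + 1) \<le> cmod (complex_of_real (2 * m) * (z * Am m z)) + 1"
        using norm_triangle_ineq[of "complex_of_real (2 * m) * (z * Am m z)" 1] by (simp add: mult.assoc)
      also have "cmod (complex_of_real (2 * m) * (z * Am m z)) = 2 * m * cmod (z * Am m z)"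
        using m0 by (simp add: norm_mult)
      also have "\<dots> \<le> 2 * m * (cmod z / (2 * m))" using mult_left_mono[OF wB[OF z], of "2 * m"] m0 by simp
      also have "\<dots> = cmod z" using m0 by simp
      finally have num: "cmod (complex_of_real (2 * m) * z * Am m z + 1) \<le> lam1 + 1" using ReZ(2)[OF z] by simp
      have "cmod (FS z) = cmod (complex_of_real (2 * m) * z * Am m z + 1) / cmod (z + 1)"
        unfolding FS_def by (simp add: norm_divide)
      also have "\<dots> \<le> cmod (complex_of_real (2 * m) * z * Am m z + 1)"
        using divide_left_mono[OF den1[OF z] norm_ge_zero[of "complex_of_real (2 * m) * z * Am m z + 1"]] den1[OF z] by (simp; metis norm_zero not_one_le_zero)
      finally show "cmod (FS z) \<le> lam1 + 1" using num by simp
    qed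
  qed (use assms(1) in simp)
  moreover have "(deriv ^^ k) (\<lambda>x. Pm chi m x / Pinf chi x) l = (deriv ^^ k) (\<lambda>t. Re (FS (of_real t))) l"
    by (rule higher_deriv_eq_open[OF oT eqL lT])
  moreover have "fact k * (2 * (lam1 + 1)) / (l / 2) ^ k = fact k * 2 ^ (k + 1) * (lam1 + 1) / l ^ k"
    by (simp add: power_divide)
  ultimately show "\<bar>(deriv ^^ k) (\<lambda>x. Pm chi m x / Pinf chi x) l\<bar> \<le> fact k * 2 ^ (k + 1) * (lam1 + 1) / l ^ k"
    by simp
  define M where "M = (lam1 + 1)\<^sup>2 / m\<^sup>2"
  have M0: "0 < M" unfolding M_def using m0 assms(1) by simp
  define GS where "GS = (\<lambda>z. 1 / (z + 1) - 1 / (complex_of_real (2 * m) * z * Am m z + 1))"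
  have hGS: "GS holomorphic_on U" unfolding GS_def
    by (intro holomorphic_intros hA) (use nz1 nz2 in auto)
  have eqG: "\<forall>x\<in>T. 1 / Pinf chi x - 1 / Pm chi m x = Re (GS (of_real x))"
  proof
    fix x assume "x \<in> T"
    then have x0: "0 < x" and c0: "chi x = 1" unfolding T_def using assms(2) by auto
    define s where "s = sqrt (x + m\<^sup>2)"
    have f: "(s - m) * (s + m) = x" "s > m" unfolding s_def using sq_facts[OF x0 m0] by auto
    have "Re (GS (of_real x)) = 1 / (x + 1) - 1 / (2 * m * x * (1 / (s + m)) + 1)"
      unfolding GS_def Am_real[OF x0] s_def by (simp del: of_real_add)
    also have "\<dots> = 1 / (x + 1) - 1 / (2 * m * (s - m) + 1)" unfolding alg2[OF m0 f(2) f(1)] ..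
    also have "\<dots> = 1 / Pinf chi x - 1 / Pm chi m x" unfolding Pm_def Pinf_def c0 s_def ..
    finally show "1 / Pinf chi x - 1 / Pm chi m x = Re (GS (of_real x))" by simp
  qed
  have "\<bar>(deriv ^^ k) (\<lambda>t. Re (GS (of_real t))) l\<bar> \<le> fact k * (2 * M) / (l / 2) ^ k"
  proof (rule cx_cauchy[OF hGS oU oT TU lT cb r0 M0])
    show "\<forall>z\<in>cball (complex_of_real l) (l / 2). cmod (GS z) \<le> M"
    proof
      fix z assume z: "z \<in> cball (complex_of_real l) (l / 2)"
      define w where "w = z * Am m z"
      have zw: "z = w\<^sup>2 + complex_of_real (2 * m) * w" unfolding w_def by (rule w_sq[OF z0[OF z] m0])
      have d1: "z + 1 \<noteq> 0" and d2: "complex_of_real (2 * m) * w + 1 \<noteq> 0"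
        using nz1 nz2 cb z unfolding w_def by (auto simp: mult.assoc)
      have "GS z = - (w\<^sup>2) / ((z + 1) * (complex_of_real (2 * m) * w + 1))"
      proof -
        have "GS z = 1 / (z + 1) - 1 / (complex_of_real (2 * m) * w + 1)"
          unfolding GS_def w_def by (simp add: mult.assoc)
        also have "\<dots> = ((complex_of_real (2 * m) * w + 1) - (z + 1)) / ((z + 1) * (complex_of_real (2 * m) * w + 1))"
          using d1 d2 by (simp add: divide_simps)
        also have "(complex_of_real (2 * m) * w + 1) - (z + 1) = - (w\<^sup>2)"
          by (subst zw) simp
        finally show ?thesis .
      qed
      then have "cmod (GS z) = (cmod w)\<^sup>2 / (cmod (z + 1) * cmod (complex_of_real (2 * m) * w + 1))"
        by (simp add: norm_divide norm_mult norm_power)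
      also have "\<dots> \<le> (cmod w)\<^sup>2"
      proof -
        have "1 \<le> cmod (z + 1) * cmod (complex_of_real (2 * m) * w + 1)"
          using den1[OF z] den2[OF z] unfolding w_def
          by (metis mult.assoc mult_mono' mult_1 zero_le_one)
        then show ?thesis by (simp add: divide_le_eq mult_le_cancel_left1)
      qed
      also have "\<dots> \<le> (cmod z / (2 * m))\<^sup>2" using wB[OF z] unfolding w_def by (simp add: power_mono)
      also have "\<dots> \<le> M"
      proof -
        have "cmod z / (2 * m) \<le> (lam1 + 1) / m"
          using ReZ(2)[OF z] m0 assms(1) by (simp add: divide_simps)
        moreover have "0 \<le> cmod z / (2 * m)" using m0 by simp
        ultimately have "(cmod z / (2 * m))\<^sup>2 \<le> ((lam1 + 1) / m)\<^sup>2" by (rule power_mono)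
        then show ?thesis unfolding M_def by (simp add: power_divide)
      qed
      finally show "cmod (GS z) \<le> M" .
    qed
  qed
  moreover have "(deriv ^^ k) (\<lambda>x. 1 / Pinf chi x - 1 / Pm chi m x) l = (deriv ^^ k) (\<lambda>t. Re (GS (of_real t))) l"
    by (rule higher_deriv_eq_open[OF oT eqG lT])
  moreover have "fact k * (2 * M) / (l / 2) ^ k \<le>
      fact k * 2 ^ (k + 1) * ((lam1 + 1)\<^sup>2 * sqrt (lam1 + 1)) / l ^ k * min (1 / m\<^sup>2) (1 / (m * sqrt (l + 1)))"
  proof -
    have e: "fact k * (2 * M) / (l / 2) ^ k = (fact k * 2 ^ (k + 1) * (lam1 + 1)\<^sup>2 / l ^ k) * (1 / m\<^sup>2)"
      unfolding M_def by (simp add: power_divide mult_ac)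
    have "1 / m\<^sup>2 \<le> sqrt (lam1 + 1) * min (1 / m\<^sup>2) (1 / (m * sqrt (l + 1)))"
      by (rule mn_ge) (use m0 assms(3,5) l0 in auto)
    moreover have "0 \<le> fact k * 2 ^ (k + 1) * (lam1 + 1)\<^sup>2 / l ^ k" using l0 by simp
    ultimately have "(fact k * 2 ^ (k + 1) * (lam1 + 1)\<^sup>2 / l ^ k) * (1 / m\<^sup>2) \<le>
        (fact k * 2 ^ (k + 1) * (lam1 + 1)\<^sup>2 / l ^ k) * (sqrt (lam1 + 1) * min (1 / m\<^sup>2) (1 / (m * sqrt (l + 1))))"
      by (rule mult_left_mono)
    then show ?thesis unfolding e by (simp add: mult.assoc mult.left_commute)
  qed
  ultimately show "\<bar>(deriv ^^ k) (\<lambda>x. 1 / Pinf chi x - 1 / Pm chi m x) l\<bar>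
        \<le> fact k * 2 ^ (k + 1) * ((lam1 + 1)\<^sup>2 * sqrt (lam1 + 1)) / l ^ k * min (1 / m\<^sup>2) (1 / (m * sqrt (l + 1)))"
    by linarith
qed

lemma alg4: fixes m x lam1 :: real assumes "2 \<le> m" "0 < lam1" "lam1 / 2 \<le> x"
  shows "lam1 / (2 + lam1) \<le> 2 * m * (sqrt (x + m\<^sup>2) - m)"
proof -
  define s where "s = sqrt (x + m\<^sup>2)"
  have x0: "0 < x" using assms by simp
  have m0: "0 < m" using assms by simp
  have ss: "s\<^sup>2 = x + m\<^sup>2" unfolding s_def using x0 by simp
  have sm: "m < s" unfolding s_def using x0 m0 real_sqrt_less_mono[of "m\<^sup>2" "x + m\<^sup>2"] by simp
  have xe: "(s - m) * (s + m) = x" using ss by (simp add: power2_eq_square algebra_simps)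
  have "s + m \<noteq> 0" using sm m0 by simp
  then have e: "2 * m * (s - m) = 2 * m * x / (s + m)" unfolding xe[symmetric] by simp
  have "x \<le> m * (x * 2)" using mult_right_mono[OF assms(1), of "x*2"] x0 by simp
  moreover have "0 \<le> x * x" by simp
  moreover have "(m + x)\<^sup>2 = x * x + m * (x * 2) + m\<^sup>2" by (simp add: power2_eq_square algebra_simps)
  ultimately have "x + m\<^sup>2 \<le> (m + x)\<^sup>2" by linarith
  then have "s \<le> sqrt ((m + x)\<^sup>2)" unfolding s_def by (rule real_sqrt_le_mono)
  then have sx: "s \<le> m + x" using m0 x0 by simp
  have mx: "x \<le> m * x" using mult_right_mono[of 1 m x] assms(1) x0 by simp
  have "m * (2 + x) = 2 * m + m * x" by (simp add: algebra_simps)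
  then have s1: "s + m \<le> m * (2 + x)" using sx mx by linarith
  have "2 * m * x / (m * (2 + x)) \<le> 2 * m * x / (s + m)"
    using s1 sm m0 x0 by (intro divide_left_mono) auto
  moreover have "2 * m * x / (m * (2 + x)) = 2 * x / (2 + x)"
  proof -
    have "2 * m * x = m * (2 * x)" by simp
    moreover have "m * (2 * x) / (m * (2 + x)) = 2 * x / (2 + x)"
      by (rule mult_divide_mult_cancel_left) (use m0 in simp)
    ultimately show ?thesis by simp
  qed
  moreover have "lam1 / (2 + lam1) \<le> 2 * x / (2 + x)"
  proof -
    have h: "0 \<le> lam1 * x" using assms x0 by simp
    have e1: "lam1 * (2 + x) = 2 * lam1 + lam1 * x" by (simp add: algebra_simps)
    have e2: "2 * x * (2 + lam1) = 4 * x + 2 * (lam1 * x)" by (simp add: algebra_simps)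
    have "lam1 * (2 + x) \<le> 2 * x * (2 + lam1)" unfolding e1 e2 using h assms(3) by linarith
    then show ?thesis using assms x0 by (simp add: divide_simps)
  qed
  ultimately show ?thesis unfolding s_def[symmetric] e by linarith
qed

lemma chi_bound:
  assumes "smooth_on {0<..} chi" "0 < a"
  shows "\<exists>B\<ge>0. \<forall>j\<le>k. \<forall>x\<in>{a..b}. \<bar>(deriv ^^ j) chi x\<bar> \<le> B"
proof -
  have one: "\<exists>B. \<forall>x\<in>{a..b}. \<bar>(deriv ^^ j) chi x\<bar> \<le> B" for j
  proof -
    have "\<forall>x\<in>{a..b}. isCont ((deriv ^^ j) chi) x"
    proof
      fix x assume "x \<in> {a..b}"
      then have "x \<in> {0<..}" using assms(2) by simp
      then have "(deriv ^^ j) chi differentiable (at x)" using assms(1) unfolding smooth_on_def by blast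
      then show "isCont ((deriv ^^ j) chi) x" by (rule differentiable_imp_continuous_within)
    qed
    then have "continuous_on {a..b} ((deriv ^^ j) chi)" by (rule continuous_at_imp_continuous_on)
    then have "compact ((deriv ^^ j) chi ` {a..b})" by (rule compact_continuous_image) simp
    then have "bounded ((deriv ^^ j) chi ` {a..b})" by (rule compact_imp_bounded)
    then show ?thesis unfolding bounded_iff by auto
  qed
  show ?thesis
  proof (induction k)
    case 0
    obtain B where "\<forall>x\<in>{a..b}. \<bar>(deriv ^^ 0) chi x\<bar> \<le> B" using one by blast
    then show ?case by (intro exI[of _ "max B 0"]) auto
  next
    case (Suc k)
    obtain B1 where B1: "B1 \<ge> 0" "\<forall>j\<le>k. \<forall>x\<in>{a..b}. \<bar>(deriv ^^ j) chi x\<bar> \<le> B1" using Suc by blast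
    obtain B2 where B2: "\<forall>x\<in>{a..b}. \<bar>(deriv ^^ Suc k) chi x\<bar> \<le> B2" using one by blast
    have "\<forall>j\<le>Suc k. \<forall>x\<in>{a..b}. \<bar>(deriv ^^ j) chi x\<bar> \<le> max B1 B2"
    proof (intro allI impI ballI)
      fix j x assume "j \<le> Suc k" "x \<in> {a..b}"
      then consider "j \<le> k" | "j = Suc k" by linarith
      then show "\<bar>(deriv ^^ j) chi x\<bar> \<le> max B1 B2"
      proof cases
        case 1 then show ?thesis using B1 \<open>x \<in> {a..b}\<close> by fastforce
      next
        case 2 then show ?thesis using B2 \<open>x \<in> {a..b}\<close> by fastforce
      qed
    qed
    then show ?case using B1(1) by (intro exI[of _ "max B1 B2"]) auto
  qed
qed

lemma FA_real: assumes "0 < x" "0 < m"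
  shows "Re (complex_of_real (2 * m) * complex_of_real x * Am m (complex_of_real x)) = 2 * m * (sqrt (x + m\<^sup>2) - m)"
proof -
  define s where "s = sqrt (x + m\<^sup>2)"
  have f: "(s - m) * (s + m) = x" "s > m" unfolding s_def using sq_facts[OF assms] by auto
  have "Re (complex_of_real (2 * m) * complex_of_real x * Am m (complex_of_real x)) = 2 * m * x * (1 / (s + m))"
    unfolding Am_real[OF assms(1)] s_def by (simp del: of_real_add)
  also have "\<dots> = 2 * m * (s - m)" by (rule alg2[OF assms(2) f(2) f(1)])
  finally show ?thesis unfolding s_def .
qed

lemma FE_real: assumes "0 < x" "0 < m"
  shows "Re (- ((complex_of_real x * Am m (complex_of_real x))\<^sup>2)) = - ((sqrt (x + m\<^sup>2) - m)\<^sup>2)"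
proof -
  define s where "s = sqrt (x + m\<^sup>2)"
  have f: "(s - m) * (s + m) = x" "s > m" unfolding s_def using sq_facts[OF assms] by auto
  have "complex_of_real x * Am m (complex_of_real x) = complex_of_real (x * (1 / (s + m)))"
    unfolding Am_real[OF assms(1)] s_def by simp
  then have "Re (- ((complex_of_real x * Am m (complex_of_real x))\<^sup>2)) = - ((x * (1 / (s + m)))\<^sup>2)"
    by (simp only: of_real_power[symmetric] of_real_minus[symmetric] Re_complex_of_real)
  also have "\<dots> = - ((s - m)\<^sup>2)" using alg2b[OF assms(2) f(2) f(1)] by simp
  finally show ?thesis unfolding s_def .
qed

lemma middle_region:
  fixes chi :: "real \<Rightarrow> real"
  assumes lam: "lam1 > 0" and sc: "smooth_on {0<..} chi" and cpos: "\<forall>s\<ge>0. chi s \<ge> 0"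
  shows "\<exists>C>0. \<forall>m l. 2 \<le> m \<and> lam1 / 2 \<le> l \<and> l \<le> lam1 \<longrightarrow>
     \<bar>(deriv ^^ k) (\<lambda>x. Pm chi m x / Pinf chi x) l\<bar> \<le> C / l ^ k \<and>
     \<bar>(deriv ^^ k) (\<lambda>x. 1 / Pinf chi x - 1 / Pm chi m x) l\<bar> \<le> C / l ^ k * min (1 / m\<^sup>2) (1 / (m * sqrt (l + 1)))"
proof -
  define S where "S = {0::real<..}"
  define U where "U = {z::complex. 0 < Re z}"
  have oS: "open S" and oU: "open U" unfolding S_def U_def using open_Re_gt by auto
  have SU: "\<forall>t\<in>S. complex_of_real t \<in> U" unfolding S_def U_def by auto
  obtain Bc where Bc0: "Bc \<ge> 0" and bc: "\<forall>j\<le>k. \<forall>x\<in>{lam1/2..lam1}. \<bar>(deriv ^^ j) chi x\<bar> \<le> Bc"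
    using chi_bound[OF sc, of "lam1/2" k lam1] lam by auto
  define R where "R = max 1 (4 / lam1)"
  define Q where "Q = fact k * 2 * R ^ k"
  have R1: "1 \<le> R" unfolding R_def by simp
  have Q0: "0 < Q" unfolding Q_def using R1 by simp
  have r0: "0 < lam1 / 4" using lam by simp
  have cm: "\<bar>(deriv ^^ j) (\<lambda>t. Re (F (of_real t))) l\<bar> \<le> Q * M"
    if hF: "F holomorphic_on U" and M0: "0 < M" and l1: "lam1 / 2 \<le> l" and jk: "j \<le> k"
      and bd: "\<forall>z\<in>cball (complex_of_real l) (lam1 / 4). cmod (F z) \<le> M" for F M j l
  proof -
    have lS: "l \<in> S" unfolding S_def using l1 lam by simp
    have cb: "cball (complex_of_real l) (lam1 / 4) \<subseteq> U" unfolding U_def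
      by (rule cball_sub_U) (use l1 lam in simp)
    have "\<bar>(deriv ^^ j) (\<lambda>t. Re (F (of_real t))) l\<bar> \<le> fact j * (2 * M) / (lam1 / 4) ^ j"
      by (rule cx_cauchy[OF hF oU oS SU lS cb r0 M0 bd])
    also have "\<dots> = fact j * (2 * M) * (4 / lam1) ^ j" by (simp add: power_divide)
    also have "\<dots> \<le> fact k * (2 * M) * R ^ k"
    proof (rule mult_mono)
      show "fact j * (2 * M) \<le> fact k * (2 * M)" using M0 jk by (simp add: fact_mono)
      have "(4 / lam1) ^ j \<le> R ^ j" unfolding R_def using lam by (intro power_mono) auto
      also have "\<dots> \<le> R ^ k" using jk R1 by (rule power_increasing)
      finally show "(4 / lam1) ^ j \<le> R ^ k" .
    qed (use M0 R1 lam in auto)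
    also have "\<dots> = Q * M" unfolding Q_def by simp
    finally show ?thesis .
  qed
  have disk: "lam1 / 4 \<le> Re z" "cmod z \<le> 2 * lam1"
    if "z \<in> cball (complex_of_real l) (lam1 / 4)" "lam1 / 2 \<le> l" "l \<le> lam1" for z l
    using cball_Re[OF that(1)] that(2,3) lam by auto
  define Bv where "Bv = Q * (2 * lam1) + Bc"
  have Bv0: "0 \<le> Bv" unfolding Bv_def using Q0 lam Bc0 by simp
  define c2 where "c2 = lam1 / (2 + lam1)"
  have c20: "0 < c2" unfolding c2_def using lam by simp
  define Dp where "Dp = Dinv Bv (lam1 / 2) k"
  define Dr where "Dr = Dinv Bv c2 k"
  have Dp0: "0 < Dp" unfolding Dp_def using Dinv_pos lam by simp
  have Dr0: "0 < Dr" unfolding Dr_def using Dinv_pos c20 by simp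
  define C1 where "C1 = 2 ^ k * Bv * Dp * lam1 ^ k"
  define C2 where "C2 = 4 ^ k * Q * lam1\<^sup>2 * Dp * Dr * sqrt (lam1 + 1) * lam1 ^ k"
  have C10: "0 \<le> C1" unfolding C1_def using Bv0 Dp0 lam by simp
  have C20: "0 \<le> C2" unfolding C2_def using Q0 Dp0 Dr0 lam by simp
  show ?thesis
  proof (intro exI[of _ "C1 + C2 + 1"] conjI allI impI)
    show "0 < C1 + C2 + 1" using C10 C20 by simp
    fix m l :: real
    assume "2 \<le> m \<and> lam1 / 2 \<le> l \<and> l \<le> lam1"
    then have m2: "2 \<le> m" and l1: "lam1 / 2 \<le> l" and l2: "l \<le> lam1" by auto
    have m0: "0 < m" using m2 by simp
    have l0: "0 < l" using l1 lam by simp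
    have lS: "l \<in> S" unfolding S_def using l0 by simp
    have lI: "l \<in> {lam1/2..lam1}" using l1 l2 by simp
    have hA: "Am m holomorphic_on U" unfolding U_def by (rule hol_Am[OF m0])
    have AmB: "cmod (Am m z) \<le> 1 / (2 * m)" if "0 < Re z" for z
    proof -
      have "sqrt (m\<^sup>2) \<le> sqrt (Re z + m\<^sup>2)" using that by (intro real_sqrt_le_mono) simp
      then have "2 * m \<le> sqrt (Re z + m\<^sup>2) + m" using m0 by simp
      then have "1 / (sqrt (Re z + m\<^sup>2) + m) \<le> 1 / (2 * m)" using m0 by (intro one_div_le) auto
      then show ?thesis using cmod_Am[OF that m0] by linarith
    qed
    have wB: "cmod (z * Am m z) \<le> cmod z / (2 * m)" if "0 < Re z" for z
      using mult_left_mono[OF AmB[OF that], of "cmod z"] by (simp add: norm_mult)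
    define FA where "FA = (\<lambda>z. complex_of_real (2 * m) * z * Am m z)"
    define FE where "FE = (\<lambda>z. - ((z * Am m z)\<^sup>2))"
    define a where "a = (\<lambda>t. Re (FA (of_real t)))"
    define e where "e = (\<lambda>t. Re (FE (of_real t)))"
    have hFA: "FA holomorphic_on U" unfolding FA_def by (intro holomorphic_intros hA)
    have hFE: "FE holomorphic_on U" unfolding FE_def by (intro holomorphic_intros hA)
    have hFI: "(\<lambda>z. z) holomorphic_on U" by (intro holomorphic_intros)
    have sa: "smooth_on S a" unfolding a_def by (rule cx_smooth[OF hFA oU oS SU])
    have se: "smooth_on S e" unfolding e_def by (rule cx_smooth[OF hFE oU oS SU])
    have sI: "smooth_on S (\<lambda>t. t)" using cx_smooth[OF hFI oU oS SU] by simp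
    have sc': "smooth_on S chi" using sc unfolding S_def .
    have bA: "\<forall>j\<le>k. \<bar>(deriv ^^ j) a l\<bar> \<le> Q * (2 * lam1)"
    proof (intro allI impI)
      fix j assume "j \<le> k"
      show "\<bar>(deriv ^^ j) a l\<bar> \<le> Q * (2 * lam1)" unfolding a_def
      proof (rule cm[OF hFA _ l1 \<open>j \<le> k\<close>])
        show "0 < 2 * lam1" using lam by simp
        show "\<forall>z\<in>cball (complex_of_real l) (lam1 / 4). cmod (FA z) \<le> 2 * lam1"
        proof
          fix z assume z: "z \<in> cball (complex_of_real l) (lam1 / 4)"
          have z0: "0 < Re z" using disk(1)[OF z l1 l2] lam by simp
          have "cmod (FA z) = 2 * m * cmod (z * Am m z)" unfolding FA_def using m0
            by (simp add: norm_mult mult.assoc)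
          also have "\<dots> \<le> 2 * m * (cmod z / (2 * m))" using mult_left_mono[OF wB[OF z0], of "2 * m"] m0 by simp
          also have "\<dots> = cmod z" using m0 by simp
          also have "\<dots> \<le> 2 * lam1" by (rule disk(2)[OF z l1 l2])
          finally show "cmod (FA z) \<le> 2 * lam1" .
        qed
      qed
    qed
    have bI: "\<forall>j\<le>k. \<bar>(deriv ^^ j) (\<lambda>t. t) l\<bar> \<le> Q * (2 * lam1)"
    proof (intro allI impI)
      fix j assume "j \<le> k"
      have "\<bar>(deriv ^^ j) (\<lambda>t. Re ((\<lambda>z. z) (complex_of_real t))) l\<bar> \<le> Q * (2 * lam1)"
      proof (rule cm[OF hFI _ l1 \<open>j \<le> k\<close>])
        show "0 < 2 * lam1" using lam by simp
        show "\<forall>z\<in>cball (complex_of_real l) (lam1 / 4). cmod z \<le> 2 * lam1"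
          using disk(2)[OF _ l1 l2] by blast
      qed
      then show "\<bar>(deriv ^^ j) (\<lambda>t. t) l\<bar> \<le> Q * (2 * lam1)" by simp
    qed
    have bE: "\<forall>j\<le>k. \<bar>(deriv ^^ j) e l\<bar> \<le> Q * (lam1\<^sup>2 / m\<^sup>2)"
    proof (intro allI impI)
      fix j assume "j \<le> k"
      show "\<bar>(deriv ^^ j) e l\<bar> \<le> Q * (lam1\<^sup>2 / m\<^sup>2)" unfolding e_def
      proof (rule cm[OF hFE _ l1 \<open>j \<le> k\<close>])
        show "0 < lam1\<^sup>2 / m\<^sup>2" using lam m0 by simp
        show "\<forall>z\<in>cball (complex_of_real l) (lam1 / 4). cmod (FE z) \<le> lam1\<^sup>2 / m\<^sup>2"
        proof
          fix z assume z: "z \<in> cball (complex_of_real l) (lam1 / 4)"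
          have z0: "0 < Re z" using disk(1)[OF z l1 l2] lam by simp
          have "cmod (FE z) = (cmod (z * Am m z))\<^sup>2" unfolding FE_def by (simp add: norm_power)
          also have "\<dots> \<le> (cmod z / (2 * m))\<^sup>2"
            using power_mono[OF wB[OF z0] norm_ge_zero, of 2] by simp
          also have "\<dots> \<le> (lam1 / m)\<^sup>2"
          proof (rule power_mono)
            show "cmod z / (2 * m) \<le> lam1 / m"
              using disk(2)[OF z l1 l2] m0 by (simp add: divide_simps)
            show "0 \<le> cmod z / (2 * m)" using m0 by simp
          qed
          also have "\<dots> = lam1\<^sup>2 / m\<^sup>2" by (simp add: power_divide)
          finally show "cmod (FE z) \<le> lam1\<^sup>2 / m\<^sup>2" .
        qed
      qed
    qed
    have a_eq: "a x = 2 * m * (sqrt (x + m\<^sup>2) - m)" if "0 < x" for x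
      unfolding a_def FA_def using FA_real[OF that m0] by simp
    have e_eq: "e x = - ((sqrt (x + m\<^sup>2) - m)\<^sup>2)" if "0 < x" for x
      unfolding e_def FE_def using FE_real[OF that m0] by simp
    have a_pos: "0 < a x" if "0 < x" for x
      using a_eq[OF that] sq_facts(2)[OF that m0] m0 by simp
    define v where "v = (\<lambda>x. x + chi x)"
    define w where "w = (\<lambda>x. a x + chi x)"
    have sv: "smooth_on S v" unfolding v_def by (rule smooth_add[OF oS sI sc'])
    have sw: "smooth_on S w" unfolding w_def by (rule smooth_add[OF oS sa sc'])
    have vnz: "\<forall>y\<in>S. v y \<noteq> 0"
    proof
      fix y assume "y \<in> S"
      then have "0 < y" unfolding S_def by simp
      moreover have "0 \<le> chi y" using cpos \<open>0 < y\<close> by simp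
      ultimately show "v y \<noteq> 0" unfolding v_def by simp
    qed
    have wnz: "\<forall>y\<in>S. w y \<noteq> 0"
    proof
      fix y assume "y \<in> S"
      then have "0 < y" unfolding S_def by simp
      then have "0 < a y" "0 \<le> chi y" using a_pos cpos by auto
      then show "w y \<noteq> 0" unfolding w_def by simp
    qed
    have vl: "lam1 / 2 \<le> \<bar>v l\<bar>"
    proof -
      have "0 \<le> chi l" using cpos l0 by simp
      then show ?thesis unfolding v_def using l0 l1 by simp
    qed
    have wl: "c2 \<le> \<bar>w l\<bar>"
    proof -
      have "c2 \<le> a l" unfolding c2_def a_eq[OF l0] by (rule alg4[OF m2 lam l1])
      moreover have "0 \<le> chi l" using cpos l0 by simp
      ultimately show ?thesis unfolding w_def by simp
    qed
    have bv: "\<forall>j\<le>k. \<bar>(deriv ^^ j) v l\<bar> \<le> Bv"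
    proof (intro allI impI)
      fix j assume j: "j \<le> k"
      have "(deriv ^^ j) v l = (deriv ^^ j) (\<lambda>t. t) l + (deriv ^^ j) chi l"
        unfolding v_def by (rule hd_add[OF oS sI sc' lS])
      then show "\<bar>(deriv ^^ j) v l\<bar> \<le> Bv" unfolding Bv_def using bI bc j lI by fastforce
    qed
    have bw: "\<forall>j\<le>k. \<bar>(deriv ^^ j) w l\<bar> \<le> Bv"
    proof (intro allI impI)
      fix j assume j: "j \<le> k"
      have "(deriv ^^ j) w l = (deriv ^^ j) a l + (deriv ^^ j) chi l"
        unfolding w_def by (rule hd_add[OF oS sa sc' lS])
      then show "\<bar>(deriv ^^ j) w l\<bar> \<le> Bv" unfolding Bv_def using bA bc j lI by fastforce
    qed
    have bp: "\<forall>j\<le>k. \<bar>(deriv ^^ j) (\<lambda>y. 1 / v y) l\<bar> \<le> Dp" unfolding Dp_def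
      by (rule hd_inv_bound[OF oS lS sv vnz _ vl bv]) (use lam in simp)
    have br: "\<forall>j\<le>k. \<bar>(deriv ^^ j) (\<lambda>y. 1 / w y) l\<bar> \<le> Dr" unfolding Dr_def
      by (rule hd_inv_bound[OF oS lS sw wnz c20 wl bw])
    have sp: "smooth_on S (\<lambda>y. 1 / v y)" by (rule smooth_inverse[OF oS sv vnz])
    have sr: "smooth_on S (\<lambda>y. 1 / w y)" by (rule smooth_inverse[OF oS sw wnz])
    have eqf: "\<forall>x\<in>S. Pm chi m x / Pinf chi x = w x * (1 / v x)"
    proof
      fix x assume "x \<in> S"
      then have "0 < x" unfolding S_def by simp
      then show "Pm chi m x / Pinf chi x = w x * (1 / v x)"
        unfolding Pm_def Pinf_def w_def v_def a_eq[OF \<open>0 < x\<close>] by simp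
    qed
    have eqg: "\<forall>x\<in>S. 1 / Pinf chi x - 1 / Pm chi m x = e x * ((1 / v x) * (1 / w x))"
    proof
      fix x assume "x \<in> S"
      then have x0: "0 < x" unfolding S_def by simp
      define s where "s = sqrt (x + m\<^sup>2)"
      have f: "(s - m) * (s + m) = x" "s > m" unfolding s_def using sq_facts[OF x0 m0] by auto
      have n1: "x + chi x \<noteq> 0" using vnz \<open>x \<in> S\<close> unfolding v_def by simp
      have n2: "2 * m * (s - m) + chi x \<noteq> 0"
      proof -
        have "w x \<noteq> 0" using wnz \<open>x \<in> S\<close> by blast
        then show ?thesis unfolding w_def a_eq[OF x0] s_def .
      qed
      show "1 / Pinf chi x - 1 / Pm chi m x = e x * ((1 / v x) * (1 / w x))"
        unfolding Pm_def Pinf_def v_def w_def a_eq[OF x0] e_eq[OF x0] s_def[symmetric]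
        by (rule alg3[OF n1 n2 f(1)])
    qed
    have F1: "\<bar>(deriv ^^ k) (\<lambda>x. Pm chi m x / Pinf chi x) l\<bar> \<le> 2 ^ k * Bv * Dp"
    proof -
      have "(deriv ^^ k) (\<lambda>x. Pm chi m x / Pinf chi x) l = (deriv ^^ k) (\<lambda>x. w x * (1 / v x)) l"
        by (rule higher_deriv_eq_open[OF oS eqf lS])
      moreover have "\<bar>(deriv ^^ k) (\<lambda>x. w x * (1 / v x)) l\<bar> \<le> 2 ^ k * Bv * Dp"
        by (rule hd_mult_bound[OF oS sw sp lS bw bp])
      ultimately show ?thesis by simp
    qed
    have F2: "\<bar>(deriv ^^ k) (\<lambda>x. 1 / Pinf chi x - 1 / Pm chi m x) l\<bar> \<le> 2 ^ k * (Q * (lam1\<^sup>2 / m\<^sup>2)) * (2 ^ k * Dp * Dr)"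
    proof -
      have "(deriv ^^ k) (\<lambda>x. 1 / Pinf chi x - 1 / Pm chi m x) l = (deriv ^^ k) (\<lambda>x. e x * ((1 / v x) * (1 / w x))) l"
        by (rule higher_deriv_eq_open[OF oS eqg lS])
      moreover have "\<bar>(deriv ^^ k) (\<lambda>x. e x * ((1 / v x) * (1 / w x))) l\<bar> \<le> 2 ^ k * (Q * (lam1\<^sup>2 / m\<^sup>2)) * (2 ^ k * Dp * Dr)"
      proof (rule hd_mult_bound[OF oS se smooth_mult[OF oS sp sr] lS bE])
        show "\<forall>j\<le>k. \<bar>(deriv ^^ j) (\<lambda>y. 1 / v y * (1 / w y)) l\<bar> \<le> 2 ^ k * Dp * Dr"
        proof (intro allI impI)
          fix j assume j: "j \<le> k"
          have "\<bar>(deriv ^^ j) (\<lambda>y. 1 / v y * (1 / w y)) l\<bar> \<le> 2 ^ j * Dp * Dr"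
            by (rule hd_mult_bound[OF oS sp sr lS]) (use bp br j in auto)
          also have "\<dots> \<le> 2 ^ k * Dp * Dr" using j Dp0 Dr0 by (simp add: power_increasing)
          finally show "\<bar>(deriv ^^ j) (\<lambda>y. 1 / v y * (1 / w y)) l\<bar> \<le> 2 ^ k * Dp * Dr" .
        qed
      qed
      ultimately show ?thesis by simp
    qed
    have lk: "l ^ k \<le> lam1 ^ k" using l0 l2 by (simp add: power_mono)
    have lk0: "0 < l ^ k" using l0 by simp
    have Cl: "X / lam1 ^ k \<le> X / l ^ k" if "0 \<le> X" for X
      using that lk lk0 by (intro divide_left_mono) auto
    show "\<bar>(deriv ^^ k) (\<lambda>x. Pm chi m x / Pinf chi x) l\<bar> \<le> (C1 + C2 + 1) / l ^ k"
    proof -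
      have "2 ^ k * Bv * Dp = C1 / lam1 ^ k" unfolding C1_def using lam by simp
      also have "\<dots> \<le> (C1 + C2 + 1) / lam1 ^ k" using C20 lam by (simp add: divide_right_mono)
      also have "\<dots> \<le> (C1 + C2 + 1) / l ^ k" by (rule Cl) (use C10 C20 in simp)
      finally show ?thesis using F1 by linarith
    qed
    show "\<bar>(deriv ^^ k) (\<lambda>x. 1 / Pinf chi x - 1 / Pm chi m x) l\<bar>
        \<le> (C1 + C2 + 1) / l ^ k * min (1 / m\<^sup>2) (1 / (m * sqrt (l + 1)))"
    proof -
      define mn where "mn = min (1 / m\<^sup>2) (1 / (m * sqrt (l + 1)))"
      have mn0: "0 \<le> mn" unfolding mn_def using m0 l0 by simp
      have mg: "1 / m\<^sup>2 \<le> sqrt (lam1 + 1) * mn" unfolding mn_def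
        by (rule mn_ge) (use m0 m2 l0 l2 in auto)
      define K where "K = 4 ^ k * Q * lam1\<^sup>2 * Dp * Dr"
      have K0: "0 \<le> K" unfolding K_def using Q0 Dp0 Dr0 by simp
      have "2 ^ k * (Q * (lam1\<^sup>2 / m\<^sup>2)) * (2 ^ k * Dp * Dr) = K * (1 / m\<^sup>2)"
        unfolding K_def by (simp add: power_mult_distrib[symmetric] mult_ac)
      also have "\<dots> \<le> K * (sqrt (lam1 + 1) * mn)" using mg K0 by (rule mult_left_mono)
      also have "\<dots> = (C2 / lam1 ^ k) * mn" unfolding C2_def K_def using lam by simp
      also have "\<dots> \<le> ((C1 + C2 + 1) / l ^ k) * mn"
      proof (rule mult_right_mono[OF _ mn0])
        have "C2 / lam1 ^ k \<le> (C1 + C2 + 1) / lam1 ^ k" using C10 lam by (simp add: divide_right_mono)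
        also have "\<dots> \<le> (C1 + C2 + 1) / l ^ k" by (rule Cl) (use C10 C20 in simp)
        finally show "C2 / lam1 ^ k \<le> (C1 + C2 + 1) / l ^ k" .
      qed
      finally show ?thesis using F2 unfolding mn_def by linarith
    qed
  qed
qed

lemma mono_b1: fixes X A C l :: real
  assumes "X \<le> A / l ^ k" "A \<le> C" "0 < l" shows "X \<le> C / l ^ k"
proof -
  have "A / l ^ k \<le> C / l ^ k" using assms(2,3) by (simp add: divide_right_mono)
  then show ?thesis using assms(1) by linarith
qed

lemma mono_b2: fixes X A C l mn :: real
  assumes "X \<le> A / l ^ k * mn" "A \<le> C" "0 < l" "0 \<le> mn" shows "X \<le> C / l ^ k * mn"
proof -
  have "A / l ^ k \<le> C / l ^ k" using assms(2,3) by (simp add: divide_right_mono)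
  then have "A / l ^ k * mn \<le> C / l ^ k * mn" using assms(4) by (rule mult_right_mono)
  then show ?thesis using assms(1) by linarith
qed

theorem propositionA2:
  fixes lam1 :: real and chi :: "real \<Rightarrow> real"
  assumes "lam1 > 0"
    and "smooth_on {0<..} chi"
    and "\<forall>s\<ge>0. chi s \<ge> 0"
    and "\<forall>s. 0 \<le> s \<and> s < lam1 / 2 \<longrightarrow> chi s = 1"
    and "\<forall>s>lam1. chi s = 0"
  shows "\<forall>k::nat. k \<ge> 1 \<longrightarrow> (\<exists>C>0. \<forall>m::real. \<forall>l::real. m \<ge> 2 \<and> l > 0 \<longrightarrow>
           \<bar>(deriv ^^ k) (\<lambda>x. Pm chi m x / Pinf chi x) l\<bar> \<le> C / l ^ k \<and>
           \<bar>(deriv ^^ k) (\<lambda>x. 1 / Pinf chi x - 1 / Pm chi m x) l\<bar>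
              \<le> C / l ^ k * min (1 / m\<^sup>2) (1 / (m * sqrt (l + 1))))"
proof (intro allI impI)
  fix k :: nat
  obtain Cm where Cm0: "Cm > 0" and Cm: "\<forall>m l. 2 \<le> m \<and> lam1 / 2 \<le> l \<and> l \<le> lam1 \<longrightarrow>
     \<bar>(deriv ^^ k) (\<lambda>x. Pm chi m x / Pinf chi x) l\<bar> \<le> Cm / l ^ k \<and>
     \<bar>(deriv ^^ k) (\<lambda>x. 1 / Pinf chi x - 1 / Pm chi m x) l\<bar> \<le> Cm / l ^ k * min (1 / m\<^sup>2) (1 / (m * sqrt (l + 1)))"
    using middle_region[OF assms(1,2,3), of k] by blast
  define CL :: real where "CL = fact k * 2 ^ (k + 1)"
  define CS1 where "CS1 = fact k * 2 ^ (k + 1) * (lam1 + 1)"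
  define CS2 where "CS2 = fact k * 2 ^ (k + 1) * ((lam1 + 1)\<^sup>2 * sqrt (lam1 + 1))"
  have CL0: "0 \<le> CL" and CS10: "0 \<le> CS1" and CS20: "0 \<le> CS2"
    unfolding CL_def CS1_def CS2_def using assms(1) by auto
  define C where "C = Cm + CL + CS1 + CS2"
  assume "k \<ge> 1"
  show "\<exists>C>0. \<forall>m::real. \<forall>l::real. m \<ge> 2 \<and> l > 0 \<longrightarrow>
           \<bar>(deriv ^^ k) (\<lambda>x. Pm chi m x / Pinf chi x) l\<bar> \<le> C / l ^ k \<and>
           \<bar>(deriv ^^ k) (\<lambda>x. 1 / Pinf chi x - 1 / Pm chi m x) l\<bar>
              \<le> C / l ^ k * min (1 / m\<^sup>2) (1 / (m * sqrt (l + 1)))"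
  proof (intro exI[of _ C] conjI allI impI)
    show "0 < C" unfolding C_def using Cm0 CL0 CS10 CS20 by simp
    fix m l :: real assume ml: "m \<ge> 2 \<and> l > 0"
    then have m2: "2 \<le> m" and l0: "0 < l" by auto
    have mn0: "0 \<le> min (1 / m\<^sup>2) (1 / (m * sqrt (l + 1)))" using m2 l0 by simp
    have le1: "Cm \<le> C" "CL \<le> C" "CS1 \<le> C" "CS2 \<le> C"
      unfolding C_def using Cm0 CL0 CS10 CS20 by auto
    consider "l < lam1 / 2" | "lam1 / 2 \<le> l \<and> l \<le> lam1" | "lam1 < l" by linarith
    then have "\<bar>(deriv ^^ k) (\<lambda>x. Pm chi m x / Pinf chi x) l\<bar> \<le> C / l ^ k \<and>
           \<bar>(deriv ^^ k) (\<lambda>x. 1 / Pinf chi x - 1 / Pm chi m x) l\<bar>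
              \<le> C / l ^ k * min (1 / m\<^sup>2) (1 / (m * sqrt (l + 1)))"
    proof cases
      case 1
      note s = small_region[OF assms(1) assms(4) m2 l0 1, of k]
      show ?thesis
        using mono_b1[OF s(1)[folded CS1_def] le1(3) l0] mono_b2[OF s(2)[folded CS2_def] le1(4) l0 mn0] by blast
    next
      case 2
      then have h: "2 \<le> m \<and> lam1 / 2 \<le> l \<and> l \<le> lam1" using m2 by simp
      have s1: "\<bar>(deriv ^^ k) (\<lambda>x. Pm chi m x / Pinf chi x) l\<bar> \<le> Cm / l ^ k"
        using Cm h by blast
      have s2: "\<bar>(deriv ^^ k) (\<lambda>x. 1 / Pinf chi x - 1 / Pm chi m x) l\<bar> \<le> Cm / l ^ k * min (1 / m\<^sup>2) (1 / (m * sqrt (l + 1)))"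
        using Cm h by blast
      show ?thesis using mono_b1[OF s1 le1(1) l0] mono_b2[OF s2 le1(1) l0 mn0] by blast
    next
      case 3
      note s = large_region[OF assms(1) assms(5) m2 3, of k]
      show ?thesis
        using mono_b1[OF s(1)[folded CL_def] le1(2) l0] mono_b2[OF s(2)[folded CL_def] le1(2) l0 mn0] by blast
    qed
    then show "\<bar>(deriv ^^ k) (\<lambda>x. Pm chi m x / Pinf chi x) l\<bar> \<le> C / l ^ k"
      "\<bar>(deriv ^^ k) (\<lambda>x. 1 / Pinf chi x - 1 / Pm chi m x) l\<bar>
              \<le> C / l ^ k * min (1 / m\<^sup>2) (1 / (m * sqrt (l + 1)))" by auto
  qed
qed

end
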